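(* Let $N\ge 1$, let $U$ be an $N\times N$ unitary matrix, and let $\rho$ be an $N\times N$ density matrix (positive semidefinite, trace one) with eigenvalues $\lambda_1\ge\lambda_2\ge\dots\ge\lambda_N$, where we set $\lambda_j=0$ for $N<j\le 2N$. Define the probability vectors $p,q\in\mathbb{R}^N$ by $p_i=\langle i|\rho|i\rangle$ and $q_i=\langle i|U^\dagger\rho U|i\rangle$, where $\{|i\rangle\}_{i=1}^N$ is the computational basis. Let $W^{(\lambda)}\in\mathbb{R}^{2N}$ be the vector defined below. Then $$p\oplus q\prec W^{(\lambda)}.$$
   Context: For $k=1,\dots,2N-1$ let $s_k=\max\{\|M\| : M \text{ is a submatrix of } U \text{ with } \#\mathrm{rows}(M)+\#\mathrm{cols}(M)=k+1\}$, where $\|M\|$ is the operator norm (largest singular value); a submatrix is obtained by selecting any subset of rows and any subset of columns. For $k=1,\dots,2N$ define $S_k$ as follows: if $k=2n$, then $S_k=\sum_{j=1}^{n}\lambda_j(1+s_{k-j})+\sum_{j=n+1}^{k}\lambda_j(1-s_{j-1})$; if $k=2n+1$ (with $n\ge 0$), then $S_k=\sum_{j=1}^{n}\lambda_j(1+s_{k-j})+\lambda_{n+1}+\sum_{j=n+2}^{k}\lambda_j(1-s_{j-1})$. Set $S_0=0$ and $W^{(\lambda)}_k=S_k-S_{k-1}$ for $k=1,\dots,2N$. The vector $p\oplus q\in\mathbb{R}^{2N}$ is the concatenation of $p$ and $q$. For real vectors $x,y$ (padded with zeros to a common length $L$), $x\prec y$ means $\sum_{i=1}^m x^{\downarrow}_i\le\sum_{i=1}^m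 y^{\downarrow}_i$ for all $m\le L$ and $\sum_i x_i=\sum_i y_i$, where $x^\downarrow$ denotes the nonincreasing rearrangement of $x$. *)

theory Defs
  imports Complex_Main
    "Jordan_Normal_Form.Schur_Decomposition"
    "Jordan_Normal_Form.DL_Submatrix"
    "Jordan_Normal_Form.Char_Poly"
begin

definition unitary_mat :: "nat \<Rightarrow> complex mat \<Rightarrow> bool" where
  "unitary_mat N U \<longleftrightarrow> U \<in> carrier_mat N N \<and>
     mat_adjoint U * U = 1\<^sub>m N \<and> U * mat_adjoint U = 1\<^sub>m N"

definition mat_trace :: "complex mat \<Rightarrow> complex" where
  "mat_trace A = (\<Sum>i<dim_row A. A $$ (i,i))"

(* Density matrix: positive semidefinite (v^* rho v >= 0 for all v; this is the
   complex order, i.e. real and nonnegative), Hermitian, trace one *)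
definition density_mat :: "nat \<Rightarrow> complex mat \<Rightarrow> bool" where
  "density_mat N \<rho> \<longleftrightarrow> \<rho> \<in> carrier_mat N N \<and> mat_adjoint \<rho> = \<rho> \<and>
     (\<forall>v \<in> carrier_vec N. conjugate v \<bullet> (\<rho> *\<^sub>v v) \<ge> 0) \<and> mat_trace \<rho> = 1"

definition vnorm :: "complex vec \<Rightarrow> real" where
  "vnorm v = sqrt (\<Sum>i<dim_vec v. (cmod (v $ i))\<^sup>2)"

definition op_norm :: "complex mat \<Rightarrow> real" where
  "op_norm M = Sup {vnorm (M *\<^sub>v v) | v. v \<in> carrier_vec (dim_col M) \<and> vnorm v \<le> 1}"

definition s_val :: "nat \<Rightarrow> complex mat \<Rightarrow> nat \<Rightarrow> real" where
  "s_val N U k = Max {op_norm (submatrix U I J) | I J.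
      I \<subseteq> {..<N} \<and> J \<subseteq> {..<N} \<and> card I + card J = k + 1}"

(* S_k, with lam 1-indexed (lam j = j-th largest eigenvalue, 0 beyond N) and s 1-indexed *)
definition S_val :: "(nat \<Rightarrow> real) \<Rightarrow> (nat \<Rightarrow> real) \<Rightarrow> nat \<Rightarrow> real" where
  "S_val lam s k = (let n = k div 2 in
     if even k then
       (\<Sum>j=1..n. lam j * (1 + s (k - j))) + (\<Sum>j=n+1..k. lam j * (1 - s (j - 1)))
     else
       (\<Sum>j=1..n. lam j * (1 + s (k - j))) + lam (n + 1)
         + (\<Sum>j=n+2..k. lam j * (1 - s (j - 1))))"

definition W_vec :: "nat \<Rightarrow> (nat \<Rightarrow> real) \<Rightarrow> (nat \<Rightarrow> real) \<Rightarrow> real list" where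
  "W_vec N lam s = map (\<lambda>k. S_val lam s k - S_val lam s (k - 1)) [1..<2*N+1]"

definition majorized :: "real list \<Rightarrow> real list \<Rightarrow> bool" where
  "majorized x y \<longleftrightarrow> (let L = max (length x) (length y);
       xd = rev (sort (x @ replicate (L - length x) 0));
       yd = rev (sort (y @ replicate (L - length y) 0)) in
     (\<forall>m \<le> L. sum_list (take m xd) \<le> sum_list (take m yd)) \<and> sum_list x = sum_list y)"

end

theory Submission
  imports Defs
begin


lemma adj_dim[simp]: "dim_row (mat_adjoint A) = dim_col A" "dim_col (mat_adjoint A) = dim_row A"
  unfolding mat_adjoint_def by (auto simp: mat_of_rows_def)

lemma adj_idx[simp]: "i < dim_col A \<Longrightarrow> j < dim_row A \<Longrightarrow> mat_adjoint A $$ (i,j) = cnj (A $$ (j,i))"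
  unfolding mat_adjoint_def by (simp add: mat_of_rows_def)

lemma mult_idx: "i < dim_row A \<Longrightarrow> j < dim_col B \<Longrightarrow> dim_col A = dim_row B \<Longrightarrow>
   (A*B) $$ (i,j) = (\<Sum>k<dim_col A. A$$(i,k) * B$$(k,j))"
  by (simp add: scalar_prod_def atLeast0LessThan)

lemma mult_vec_idx: "i < dim_row A \<Longrightarrow> dim_vec v = dim_col A \<Longrightarrow>
   (A *\<^sub>v v) $ i = (\<Sum>k<dim_col A. A$$(i,k) * v $ k)"
  by (simp add: scalar_prod_def atLeast0LessThan)

definition onc :: "nat \<Rightarrow> nat \<Rightarrow> (nat \<Rightarrow> nat \<Rightarrow> complex) \<Rightarrow> bool" where
  "onc n k Y \<longleftrightarrow> (\<forall>a<k. \<forall>b<k. (\<Sum>i<n. cnj (Y i a) * Y i b) = (if a = b then 1 else 0))"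

definition ronc :: "nat \<Rightarrow> nat \<Rightarrow> (nat \<Rightarrow> nat \<Rightarrow> complex) \<Rightarrow> bool" where
  "ronc n k H \<longleftrightarrow> (\<forall>a<n. \<forall>b<n. (\<Sum>l<k. H a l * cnj (H b l)) = (if a = b then 1 else 0))"

definition unc :: "nat \<Rightarrow> (nat \<Rightarrow> nat \<Rightarrow> complex) \<Rightarrow> bool" where
  "unc n H \<longleftrightarrow> onc n n H \<and> ronc n n H"

lemma unitary_UN: assumes "unitary_mat N U" shows "unc N (\<lambda>i j. U $$ (i,j))"
proof -
  have U: "U \<in> carrier_mat N N" and 1: "mat_adjoint U * U = 1\<^sub>m N" and 2: "U * mat_adjoint U = 1\<^sub>m N"
    using assms unfolding unitary_mat_def by auto
  have "onc N N (\<lambda>i j. U $$ (i,j))" unfolding onc_def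
  proof (intro allI impI)
    fix a b assume a: "a < N" and b: "b < N"
    have "(mat_adjoint U * U) $$ (a,b) = (if a = b then 1 else 0)" using 1 a b by simp
    moreover have "(mat_adjoint U * U) $$ (a,b) = (\<Sum>i<N. cnj (U $$ (i, a)) * U $$ (i, b))"
      using U a b by (subst mult_idx) auto
    ultimately show "(\<Sum>i<N. cnj (U $$ (i, a)) * U $$ (i, b)) = (if a = b then 1 else 0)" by simp
  qed
  moreover have "ronc N N (\<lambda>i j. U $$ (i,j))" unfolding ronc_def
  proof (intro allI impI)
    fix a b assume a: "a < N" and b: "b < N"
    have "(U * mat_adjoint U) $$ (a,b) = (if a = b then 1 else 0)" using 2 a b by simp
    moreover have "(U * mat_adjoint U) $$ (a,b) = (\<Sum>l<N. U $$ (a, l) * cnj (U $$ (b, l)))"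
      using U a b by (subst mult_idx) auto
    ultimately show "(\<Sum>l<N. U $$ (a, l) * cnj (U $$ (b, l))) = (if a = b then 1 else 0)" by simp
  qed
  ultimately show ?thesis unfolding unc_def by simp
qed

lemma kernel_fun:
  fixes M :: "nat \<Rightarrow> nat \<Rightarrow> complex"
  assumes "r < c"
  shows "\<exists>z. (\<exists>l<c. z l \<noteq> 0) \<and> (\<forall>i<r. (\<Sum>l<c. M i l * z l) = 0)"
proof -
  define B where "B = mat\<^sub>r c c (\<lambda>i. if i = r then 0\<^sub>v c else vec c (\<lambda>l. M i l))"
  have Bc: "B \<in> carrier_mat c c" unfolding B_def by auto
  have "det B = 0" unfolding B_def
    by (rule det_row_0[OF assms], auto)
  then obtain v where v: "v \<in> carrier_vec c" "v \<noteq> 0\<^sub>v c" "B *\<^sub>v v = 0\<^sub>v c"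
    using det_0_iff_vec_prod_zero_field[OF Bc] by auto
  have "\<exists>l<c. v $ l \<noteq> 0"
  proof (rule ccontr)
    assume "\<not> ?thesis"
    then have "v = 0\<^sub>v c" using v(1) by (intro eq_vecI) auto
    then show False using v(2) by simp
  qed
  moreover have "\<forall>i<r. (\<Sum>l<c. M i l * v $ l) = 0"
  proof (intro allI impI)
    fix i assume i: "i < r"
    have "(B *\<^sub>v v) $ i = 0" using v(3) i assms by simp
    moreover have "(B *\<^sub>v v) $ i = (\<Sum>l<c. M i l * v $ l)"
      using i assms v(1) Bc unfolding B_def by (simp add: mult_vec_idx scalar_prod_def atLeast0LessThan)
    ultimately show "(\<Sum>l<c. M i l * v $ l) = 0" by simp
  qed
  ultimately show ?thesis by blast
qed


lemma cnj_mult_self: "cnj z * z = complex_of_real ((cmod z)^2)"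
  using complex_norm_square[of z] by (simp add: mult.commute)

lemma sum_cnj_self: "(\<Sum>r\<in>A. cnj (w r) * w r) = complex_of_real (\<Sum>r\<in>A. (cmod (w r))^2)"
  by (simp add: cnj_mult_self)

lemma refl_onc:
  fixes w :: "nat \<Rightarrow> complex" and a :: real
  assumes h: "a * a * (\<Sum>r<k. (cmod (w r))^2) = 2 * a"
  shows "onc k k (\<lambda>r s. (if r = s then 1 else 0) - complex_of_real a * w r * cnj (w s))"
  unfolding onc_def
proof (intro allI impI)
  fix p q assume p: "p < k" and q: "q < k"
  define nw where "nw = (\<Sum>r<k. (cmod (w r))^2)"
  have e: "\<And>r. cnj ((if r = p then 1 else 0) - complex_of_real a * w r * cnj (w p)) *
        ((if r = q then 1 else 0) - complex_of_real a * w r * cnj (w q))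
     = (if r = p then (if p = q then 1 else 0) else 0)
       - (if r = p then complex_of_real a * w p * cnj (w q) else 0)
       - (if r = q then complex_of_real a * cnj (w q) * w p else 0)
       + complex_of_real (a*a) * w p * cnj (w q) * (cnj (w r) * w r)"
    by (auto simp: algebra_simps)
  have "(\<Sum>r<k. cnj ((if r = p then 1 else 0) - complex_of_real a * w r * cnj (w p)) *
        ((if r = q then 1 else 0) - complex_of_real a * w r * cnj (w q)))
     = (if p = q then 1 else 0) - complex_of_real a * w p * cnj (w q)
       - complex_of_real a * cnj (w q) * w p
       + complex_of_real (a*a) * w p * cnj (w q) * (\<Sum>r<k. cnj (w r) * w r)"
    unfolding e using p q
    by (simp add: sum.distrib sum_subtractf sum_distrib_left[symmetric])
  also have "(\<Sum>r<k. cnj (w r) * w r) = complex_of_real nw" unfolding nw_def by (rule sum_cnj_self)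
  also have "complex_of_real (a*a) * w p * cnj (w q) * complex_of_real nw
      = complex_of_real (a*a*nw) * w p * cnj (w q)" by (simp add: algebra_simps)
  also have "a*a*nw = 2*a" using h nw_def by simp
  finally show "(\<Sum>r<k. cnj ((if r = p then 1 else 0) - complex_of_real a * w r * cnj (w p)) *
        ((if r = q then 1 else 0) - complex_of_real a * w r * cnj (w q))) = (if p = q then 1 else 0)"
    by (simp add: algebra_simps)
qed

lemma refl_ronc:
  fixes w :: "nat \<Rightarrow> complex" and a :: real
  assumes h: "a * a * (\<Sum>r<k. (cmod (w r))^2) = 2 * a"
  shows "ronc k k (\<lambda>r s. (if r = s then 1 else 0) - complex_of_real a * w r * cnj (w s))"
proof -
  have "onc k k (\<lambda>r s. (if r = s then 1 else 0) - complex_of_real a * w r * cnj (w s))"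
    by (rule refl_onc[OF h])
  then show ?thesis unfolding onc_def ronc_def
  proof (intro allI impI)
    fix p q assume o: "\<forall>a'<k. \<forall>b<k. (\<Sum>i<k. cnj ((if i = a' then 1 else 0) - complex_of_real a * w i * cnj (w a')) *
                ((if i = b then 1 else 0) - complex_of_real a * w i * cnj (w b))) = (if a' = b then 1 else 0)"
      and p: "p < k" and q: "q < k"
    have "(\<Sum>l<k. ((if p = l then 1 else 0) - complex_of_real a * w p * cnj (w l)) *
        cnj ((if q = l then 1 else 0) - complex_of_real a * w q * cnj (w l)))
      = (\<Sum>l<k. cnj ((if l = p then 1 else 0) - complex_of_real a * w l * cnj (w p)) *
                ((if l = q then 1 else 0) - complex_of_real a * w l * cnj (w q)))"
      by (intro sum.cong refl) (auto simp: algebra_simps)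
    also have "\<dots> = (if p = q then 1 else 0)" using o p q by blast
    finally show "(\<Sum>l<k. ((if p = l then 1 else 0) - complex_of_real a * w p * cnj (w l)) *
        cnj ((if q = l then 1 else 0) - complex_of_real a * w q * cnj (w l))) = (if p = q then 1 else 0)" .
  qed
qed

lemma completion:
  fixes z :: "nat \<Rightarrow> complex"
  assumes k: "0 < k" and zn: "(\<Sum>r<k. (cmod (z r))^2) = 1"
  shows "\<exists>H. unc k H \<and> (\<forall>r<k. H r 0 = z r)"
proof -
  define \<rho>0 where "\<rho>0 = cmod (z 0)"
  define \<theta> where "\<theta> = (if z 0 = 0 then 1 else z 0 / complex_of_real \<rho>0)"
  have th1: "cmod \<theta> = 1" unfolding \<theta>_def \<rho>0_def by (auto simp: norm_divide)
  have thc: "cnj \<theta> * \<theta> = 1" using th1 cnj_mult_self[of \<theta>] by simp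
  have z0: "z 0 = complex_of_real \<rho>0 * \<theta>" unfolding \<theta>_def \<rho>0_def by auto
  obtain k' where k': "k = Suc k'" using k by (cases k) auto
  have zs: "(cmod (z 0))^2 + (\<Sum>r<k'. (cmod (z (Suc r)))^2) = 1"
    using zn unfolding k' sum.lessThan_Suc_shift by simp
  have rpos: "0 \<le> \<rho>0" unfolding \<rho>0_def by simp
  have "\<rho>0^2 \<le> 1" using zs unfolding \<rho>0_def[symmetric]
    by (metis le_add_same_cancel1 sum_nonneg zero_le_power2)
  then have r1: "\<rho>0 \<le> 1" using rpos by (simp add: power_le_one_iff)
  define w where "w r = (if r = 0 then \<theta> else 0) - z r" for r
  define nw where "nw = (\<Sum>r<k. (cmod (w r))^2)"
  have w0: "w 0 = complex_of_real (1 - \<rho>0) * \<theta>" unfolding w_def z0 by (simp add: algebra_simps)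
  have cw0: "cmod (w 0) = 1 - \<rho>0" unfolding w0 norm_mult th1 norm_of_real using r1 by simp
  have "nw = (cmod (w 0))^2 + (\<Sum>r<k'. (cmod (z (Suc r)))^2)"
    unfolding nw_def k' sum.lessThan_Suc_shift by (simp add: w_def)
  also have "\<dots> = (1 - \<rho>0)^2 + (1 - \<rho>0^2)" using zs cw0 unfolding \<rho>0_def by simp
  finally have nwe: "nw = 2 - 2 * \<rho>0" by (simp add: power2_eq_square algebra_simps)
  define a where "a = (if nw = 0 then 0 else 2 / nw)"
  have ha: "a * a * nw = 2 * a" unfolding a_def by auto
  define G where "G r s = (if r = s then 1 else 0) - complex_of_real a * w r * cnj (w s)" for r s
  have Go: "onc k k G" unfolding G_def by (rule refl_onc) (use ha nw_def in simp)
  have Gr: "ronc k k G" unfolding G_def by (rule refl_ronc) (use ha nw_def in simp)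
  define H where "H r s = \<theta> * G r s" for r s
  have "onc k k H" using Go unfolding onc_def H_def
  proof (intro allI impI)
    fix p q assume "\<forall>a<k. \<forall>b<k. (\<Sum>i<k. cnj (G i a) * G i b) = (if a = b then 1 else 0)" "p < k" "q < k"
    then have "(\<Sum>i<k. cnj (G i p) * G i q) = (if p = q then 1 else 0)" by blast
    moreover have "(\<Sum>i<k. cnj (\<theta> * G i p) * (\<theta> * G i q)) = (cnj \<theta> * \<theta>) * (\<Sum>i<k. cnj (G i p) * G i q)"
      by (simp add: sum_distrib_left algebra_simps)
    ultimately show "(\<Sum>i<k. cnj (\<theta> * G i p) * (\<theta> * G i q)) = (if p = q then 1 else 0)" using thc by simp
  qed
  moreover have "ronc k k H" using Gr unfolding ronc_def H_def
  proof (intro allI impI)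
    fix p q assume "\<forall>a<k. \<forall>b<k. (\<Sum>l<k. G a l * cnj (G b l)) = (if a = b then 1 else 0)" "p < k" "q < k"
    then have "(\<Sum>l<k. G p l * cnj (G q l)) = (if p = q then 1 else 0)" by blast
    moreover have "(\<Sum>l<k. \<theta> * G p l * cnj (\<theta> * G q l)) = (cnj \<theta> * \<theta>) * (\<Sum>l<k. G p l * cnj (G q l))"
      by (simp add: sum_distrib_left algebra_simps)
    ultimately show "(\<Sum>l<k. \<theta> * G p l * cnj (\<theta> * G q l)) = (if p = q then 1 else 0)" using thc by simp
  qed
  moreover have "\<forall>r<k. H r 0 = z r"
  proof (intro allI impI)
    fix r assume r: "r < k"
    show "H r 0 = z r"
    proof (cases "nw = 0")
      case True
      have "\<forall>r\<in>{..<k}. (cmod (w r))^2 = 0"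
        using True unfolding nw_def by (subst sum_nonneg_eq_0_iff[symmetric]) auto
      then have "w r = 0" using r by simp
      then show ?thesis using r unfolding H_def G_def w_def a_def using True by auto
    next
      case False
      have rn1: "1 - \<rho>0 \<noteq> 0" using False nwe by simp
      have av: "a = 1 / (1 - \<rho>0)" unfolding a_def using False nwe rn1 by (simp add: field_simps)
      have cw: "cnj (w 0) = complex_of_real (1 - \<rho>0) * cnj \<theta>" unfolding w0 by simp
      have "H r 0 = \<theta> * (if r = 0 then 1 else 0) - (complex_of_real a * complex_of_real (1 - \<rho>0)) * (cnj \<theta> * \<theta>) * w r"
        unfolding H_def G_def cw by (simp add: algebra_simps)
      also have "complex_of_real a * complex_of_real (1 - \<rho>0) = 1"
        unfolding av of_real_mult[symmetric] using rn1 by simp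
      finally show ?thesis using thc unfolding w_def by simp
    qed
  qed
  ultimately show ?thesis unfolding unc_def by blast
qed


lemma adj_carrier[simp]: "(A::complex mat) \<in> carrier_mat n m \<Longrightarrow> mat_adjoint A \<in> carrier_mat m n"
  unfolding carrier_mat_def by simp

lemma adj_mult: assumes A: "(A::complex mat) \<in> carrier_mat n m" and B: "B \<in> carrier_mat m p"
  shows "mat_adjoint (A * B) = mat_adjoint B * mat_adjoint A"
proof (rule eq_matI)
  fix i j assume i: "i < dim_row (mat_adjoint B * mat_adjoint A)" and j: "j < dim_col (mat_adjoint B * mat_adjoint A)"
  then have i: "i < p" and j: "j < n" using A B by auto
  have "mat_adjoint (A * B) $$ (i,j) = cnj ((A*B) $$ (j,i))" using A B i j by simp
  also have "\<dots> = cnj (\<Sum>k<m. A$$(j,k) * B$$(k,i))" using A B i j by (subst mult_idx) auto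
  also have "\<dots> = (\<Sum>k<m. cnj (B$$(k,i)) * cnj (A$$(j,k)))" by (simp add: mult.commute)
  also have "\<dots> = (mat_adjoint B * mat_adjoint A) $$ (i,j)" using A B i j
    by (subst mult_idx) (auto intro!: sum.cong)
  finally show "mat_adjoint (A * B) $$ (i, j) = (mat_adjoint B * mat_adjoint A) $$ (i, j)" .
qed (use A B in auto)

lemma adj_adj[simp]: "mat_adjoint (mat_adjoint (A::complex mat)) = A"
  by (rule eq_matI) auto

lemma adj_block: assumes P: "(P::complex mat) \<in> carrier_mat m m"
  shows "mat_adjoint (four_block_mat (1\<^sub>m 1) (0\<^sub>m 1 m) (0\<^sub>m m 1) P)
       = four_block_mat (1\<^sub>m 1) (0\<^sub>m 1 m) (0\<^sub>m m 1) (mat_adjoint P)"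
proof (rule eq_matI)
  fix i j assume "i < dim_row (four_block_mat (1\<^sub>m 1) (0\<^sub>m 1 m) (0\<^sub>m m 1) (mat_adjoint P))"
    "j < dim_col (four_block_mat (1\<^sub>m 1) (0\<^sub>m 1 m) (0\<^sub>m m 1) (mat_adjoint P))"
  then have i: "i < 1 + m" and j: "j < 1 + m" using P by auto
  have "mat_adjoint (four_block_mat (1\<^sub>m 1) (0\<^sub>m 1 m) (0\<^sub>m m 1) P) $$ (i,j)
     = cnj (four_block_mat (1\<^sub>m 1) (0\<^sub>m 1 m) (0\<^sub>m m 1) P $$ (j,i))"
    by (rule adj_idx) (use i j P in auto)
  also have "\<dots> = four_block_mat (1\<^sub>m 1) (0\<^sub>m 1 m) (0\<^sub>m m 1) (mat_adjoint P) $$ (i,j)"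
    using i j P by auto
  finally show "mat_adjoint (four_block_mat (1\<^sub>m 1) (0\<^sub>m 1 m) (0\<^sub>m m 1) P) $$ (i,j)
     = four_block_mat (1\<^sub>m 1) (0\<^sub>m 1 m) (0\<^sub>m m 1) (mat_adjoint P) $$ (i,j)" .
qed (use P in auto)

definition unit_mat :: "nat \<Rightarrow> complex mat \<Rightarrow> bool" where
  "unit_mat n P \<longleftrightarrow> P \<in> carrier_mat n n \<and> mat_adjoint P * P = 1\<^sub>m n \<and> P * mat_adjoint P = 1\<^sub>m n"

lemma unc_mat: assumes "unc n H"
  shows "unit_mat n (mat n n (\<lambda>(i,j). H i j))"
proof -
  let ?W = "mat n n (\<lambda>(i,j). H i j)"
  have o: "onc n n H" and r: "ronc n n H" using assms unfolding unc_def by auto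
  have "mat_adjoint ?W * ?W = 1\<^sub>m n"
  proof (rule eq_matI)
    fix i j assume "i < dim_row (1\<^sub>m n)" "j < dim_col (1\<^sub>m n)"
    then have i: "i < n" and j: "j < n" by auto
    have "(mat_adjoint ?W * ?W) $$ (i,j) = (\<Sum>k<n. cnj (H k i) * H k j)"
      using i j by (subst mult_idx) auto
    then show "(mat_adjoint ?W * ?W) $$ (i,j) = 1\<^sub>m n $$ (i,j)" using o i j unfolding onc_def by auto
  qed auto
  moreover have "?W * mat_adjoint ?W = 1\<^sub>m n"
  proof (rule eq_matI)
    fix i j assume "i < dim_row (1\<^sub>m n)" "j < dim_col (1\<^sub>m n)"
    then have i: "i < n" and j: "j < n" by auto
    have "(?W * mat_adjoint ?W) $$ (i,j) = (\<Sum>k<n. H i k * cnj (H j k))"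
      using i j by (subst mult_idx) auto
    then show "(?W * mat_adjoint ?W) $$ (i,j) = 1\<^sub>m n $$ (i,j)" using r i j unfolding ronc_def by auto
  qed auto
  ultimately show ?thesis unfolding unit_mat_def by auto
qed

lemma unitary_with_col0:
  assumes v: "v \<in> carrier_vec n" and v0: "v \<noteq> 0\<^sub>v n"
  shows "\<exists>W c. unit_mat n W \<and> c \<noteq> 0 \<and> col W 0 = c \<cdot>\<^sub>v v"
proof -
  have "\<exists>l<n. v $ l \<noteq> 0"
  proof (rule ccontr)
    assume "\<not> ?thesis"
    then have "v = 0\<^sub>v n" using v by (intro eq_vecI) auto
    then show False using v0 by simp
  qed
  then obtain l where l: "l < n" "v $ l \<noteq> 0" by auto
  define s where "s = (\<Sum>r<n. (cmod (v $ r))^2)"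
  have "(cmod (v $ l))^2 \<le> s" unfolding s_def
    by (rule member_le_sum) (use l in auto)
  moreover have "(cmod (v $ l))^2 > 0" using l by simp
  ultimately have s0: "s > 0" by linarith
  define c where "c = complex_of_real (1 / sqrt s)"
  have c0: "c \<noteq> 0" unfolding c_def using s0 by simp
  define z where "z r = c * v $ r" for r
  have "(\<Sum>r<n. (cmod (z r))^2) = (\<Sum>r<n. (1/ sqrt s)^2 * (cmod (v $ r))^2)"
    unfolding z_def c_def norm_mult norm_of_real by (intro sum.cong refl) (simp add: power_divide)
  also have "\<dots> = (1/sqrt s)^2 * s" unfolding s_def by (simp add: sum_distrib_left)
  also have "\<dots> = 1" using s0 by (simp add: power_divide)
  finally have zn: "(\<Sum>r<n. (cmod (z r))^2) = 1" .
  have n0: "0 < n" using l by auto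
  obtain H where H: "unc n H" "\<forall>r<n. H r 0 = z r" using completion[OF n0 zn] by blast
  let ?W = "mat n n (\<lambda>(i,j). H i j)"
  have "col ?W 0 = c \<cdot>\<^sub>v v" using H(2) n0 v by (intro eq_vecI) (auto simp: z_def)
  then show ?thesis using unc_mat[OF H(1)] c0 by blast
qed


theorem schur_unitary:
  assumes "A \<in> carrier_mat n n"
    and "char_poly A = (\<Prod> (e :: complex) \<leftarrow> es. [:- e, 1:])"
  shows "\<exists>P B. similar_mat_wit A B P (mat_adjoint P) \<and> upper_triangular B \<and> diag_mat B = es"
  using assms
proof (induct es arbitrary: n A)
  case Nil
  with degree_monic_char_poly[of A n]
  have n: "n = 0" by auto
  have "similar_mat_wit A A (1\<^sub>m n) (mat_adjoint (1\<^sub>m n))"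
    using Nil n unfolding similar_mat_wit_def by (auto simp: Let_def)
  then show ?case using n Nil by (intro exI[of _ "1\<^sub>m n"] exI[of _ A]) (auto simp: diag_mat_def upper_triangular_def)
next
  case (Cons e es n A)
  let ?n1 = "n - 1"
  from Cons have A: "A \<in> carrier_mat n n" and dim: "dim_row A = n" by auto
  let ?cp = "char_poly A"
  from Cons(3)
  have cp: "?cp = [: -e, 1 :] * (\<Prod>e \<leftarrow> es. [:- e, 1:])" by auto
  have mon: "monic (\<Prod>e\<leftarrow> es. [:- e, 1:])" by (rule monic_prod_list, auto)
  have deg: "degree ?cp = Suc (degree (\<Prod>e\<leftarrow> es. [:- e, 1:]))" unfolding cp
    by (subst degree_mult_eq, insert mon, auto)
  with degree_monic_char_poly[OF A] have n: "n \<noteq> 0" by auto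
  have e: "eigenvalue A e"
    unfolding eigenvalue_root_char_poly[OF A] cp by simp
  define v where "v = find_eigenvector A e"
  from find_eigenvector[OF A e] have ev: "eigenvector A v e" unfolding v_def .
  from this[unfolded eigenvector_def]
  have v[simp]: "v \<in> carrier_vec n" and v0: "v \<noteq> 0\<^sub>v n" and eigen: "A *\<^sub>v v = e \<cdot>\<^sub>v v" using A by auto
  obtain W c where Wu: "unit_mat n W" and c0: "c \<noteq> 0" and Wc: "col W 0 = c \<cdot>\<^sub>v v"
    using unitary_with_col0[OF v v0] by blast
  define W' where "W' = mat_adjoint W"
  have W: "W \<in> carrier_mat n n" using Wu unfolding unit_mat_def by auto
  have W': "W' \<in> carrier_mat n n" unfolding W'_def using W by auto
  have W'W: "W' * W = 1\<^sub>m n" and WW': "W * W' = 1\<^sub>m n" using Wu unfolding unit_mat_def W'_def by auto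
  define A' where "A' = W' * A * W"
  have A': "A' \<in> carrier_mat n n" using W W' A unfolding A'_def by auto
  have A'A_wit: "similar_mat_wit A' A W' W"
    by (rule similar_mat_witI[of _ _ n], insert W W' A A' W'W WW', auto simp: A'_def)
  from similar_mat_wit_sym[OF A'A_wit] have simAA': "similar_mat_wit A A' W W'" by auto
  let ?f = "(\<lambda> i. if i = 0 then e else 0)"
  have AW0: "col (A * W) 0 = e \<cdot>\<^sub>v col W 0"
  proof -
    have "col (A * W) 0 = A *\<^sub>v col W 0" using A W n by (intro eq_vecI) auto
    also have "\<dots> = c \<cdot>\<^sub>v (A *\<^sub>v v)" unfolding Wc using mult_mat_vec[OF A v] by simp
    also have "\<dots> = e \<cdot>\<^sub>v col W 0" unfolding eigen Wc by (intro eq_vecI) auto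
    finally show ?thesis .
  qed
  have col0: "col A' 0 = vec n ?f"
  proof (rule eq_vecI)
    fix i assume "i < dim_vec (vec n ?f)"
    then have i: "i < n" by simp
    have "col A' 0 $ i = (W' * (A * W)) $$ (i, 0)" unfolding A'_def using A W W' i n by auto
    also have "\<dots> = row W' i \<bullet> col (A * W) 0" using A W W' i n by auto
    also have "\<dots> = e * (row W' i \<bullet> col W 0)" unfolding AW0
      using W W' i by (subst scalar_prod_smult_distrib[of _ n]) auto
    also have "row W' i \<bullet> col W 0 = (W' * W) $$ (i, 0)" using W W' i n by auto
    also have "\<dots> = (if i = 0 then 1 else 0)" unfolding W'W using i n by auto
    finally show "col A' 0 $ i = vec n ?f $ i" using i by auto
  qed (use A' in auto)
  obtain A1 A2 A0 A3 where splitA': "split_block A' 1 1 = (A1,A2,A0,A3)"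
    by (cases "split_block A' 1 1", auto)
  from A' n have "dim_row A' = 1 + ?n1" "dim_col A' = 1 + ?n1" by auto
  from split_block[OF splitA' this] have A2: "A2 \<in> carrier_mat 1 ?n1"
    and A3: "A3 \<in> carrier_mat ?n1 ?n1"
    and A'block: "A' = four_block_mat A1 A2 A0 A3" by auto
  have A1id: "A1 = mat 1 1 (\<lambda> _. e)"
    using splitA'[unfolded split_block_def Let_def] arg_cong[OF col0, of "\<lambda> v. v $ 0"] A' n
    by (auto simp: col_def)
  have A1: "A1 \<in> carrier_mat 1 1" unfolding A1id by auto
  {
    fix i
    assume "i < ?n1"
    with arg_cong[OF col0, of "\<lambda> v. v $ Suc i"] A'
    have "A' $$ (Suc i, 0) = 0" by auto
  } note A'0 = this
  have A0id: "A0 = 0\<^sub>m ?n1 1"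
    using splitA'[unfolded split_block_def Let_def] A'0 A' by auto
  have A0: "A0 \<in> carrier_mat ?n1 1" unfolding A0id by auto
  have A'A: "similar_mat A' A" using A'A_wit unfolding similar_mat_def by blast
  from cp char_poly_similar[OF A'A]
  have cp: "char_poly A' = [: -e,1 :] * (\<Prod> e \<leftarrow> es. [:- e, 1:])" by simp
  also have "char_poly A' = char_poly A1 * char_poly A3"
    unfolding A'block A0id
    by (rule char_poly_four_block_zeros_col[OF A1 A2 A3])
  also have "char_poly A1 = [: -e,1 :]"
    by (simp add: A1id char_poly_defs det_def sign_def)
  finally have cp: "char_poly A3 = (\<Prod> e \<leftarrow> es. [:- e, 1:])"
    by (metis mult_cancel_left pCons_eq_0_iff zero_neq_one)
  from Cons(1)[OF A3 cp] obtain P' B where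
    simIH: "similar_mat_wit A3 B P' (mat_adjoint P')" and ut: "upper_triangular B" and diag: "diag_mat B = es" by auto
  let ?Q' = "mat_adjoint P'"
  from similar_mat_witD2[OF A3 simIH]
  have B: "B \<in> carrier_mat ?n1 ?n1" and P': "P' \<in> carrier_mat ?n1 ?n1" and Q': "?Q' \<in> carrier_mat ?n1 ?n1"
    and PQ': "P' * ?Q' = 1\<^sub>m ?n1" by auto
  let ?P' = "four_block_mat (1\<^sub>m 1) (0\<^sub>m 1 ?n1) (0\<^sub>m ?n1 1) P'"
  let ?Q'' = "four_block_mat (1\<^sub>m 1) (0\<^sub>m 1 ?n1) (0\<^sub>m ?n1 1) ?Q'"
  define C where "C = four_block_mat A1 (A2 * P') A0 B"
  have A0_eq: "A0 = P' * A0 * 1\<^sub>m 1" unfolding A0id using P' by auto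
  have A2_eq: "A2 = 1\<^sub>m 1 * (A2 * P') * ?Q'"
  proof -
    have "1\<^sub>m 1 * (A2 * P') * ?Q' = A2 * P' * ?Q'" using A2 P' by simp
    also have "\<dots> = A2 * (P' * ?Q')" using A2 P' Q' by (rule assoc_mult_mat)
    also have "\<dots> = A2" unfolding PQ' using A2 by simp
    finally show ?thesis by simp
  qed
  have simA'C: "similar_mat_wit A' C ?P' ?Q''" unfolding A'block C_def
    by (rule similar_mat_wit_four_block[OF similar_mat_wit_refl[OF A1] simIH A2_eq A0_eq A1 A3 A0],
    insert PQ' A2 P' Q', auto)
  have ut1: "upper_triangular A1" unfolding A1id by auto
  have ut: "upper_triangular C" unfolding C_def A0id
    by (intro upper_triangular_four_block[OF _ B ut1 ut], auto simp: A1id)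
  from A1id have diagA1: "diag_mat A1 = [e]" unfolding diag_mat_def by auto
  from diag_four_block_mat[OF A1 B] have diag: "diag_mat C = e # es" unfolding diag diagA1 C_def by simp
  have P'c: "?P' \<in> carrier_mat n n" using P' n by auto
  have adjP: "mat_adjoint (W * ?P') = ?Q'' * W'"
    unfolding W'_def using adj_mult[OF W P'c] adj_block[OF P'] by simp
  from similar_mat_wit_trans[OF simAA' simA'C] adjP
  have "similar_mat_wit A C (W * ?P') (mat_adjoint (W * ?P'))" by simp
  with ut diag show ?case by blast
qed


lemma spectral:
  assumes rc: "\<rho> \<in> carrier_mat N N" and herm: "mat_adjoint \<rho> = \<rho>"
    and cp: "char_poly \<rho> = (\<Prod>x\<leftarrow>ev. [:- complex_of_real x, 1:])"
  shows "\<exists>V. unitary_mat N V \<and> (\<forall>i<N. \<forall>k<N. \<rho> $$ (i,k) = (\<Sum>j<N. V$$(i,j) * complex_of_real (ev!j) * cnj (V$$(k,j))))"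
proof -
  have cp': "char_poly \<rho> = (\<Prod>e\<leftarrow>map complex_of_real ev. [:- e, 1:])"
    unfolding cp by (simp add: o_def)
  obtain P B where sim: "similar_mat_wit \<rho> B P (mat_adjoint P)" and ut: "upper_triangular B"
    and dg: "diag_mat B = map complex_of_real ev"
    using schur_unitary[OF rc cp'] by blast
  note sd = similar_mat_witD2[OF rc sim]
  have PQ: "P * mat_adjoint P = 1\<^sub>m N" by (rule sd(1))
  have QP: "mat_adjoint P * P = 1\<^sub>m N" by (rule sd(2))
  have re: "\<rho> = P * B * mat_adjoint P" by (rule sd(3))
  have B: "B \<in> carrier_mat N N" by (rule sd(5))
  have P: "P \<in> carrier_mat N N" by (rule sd(6))
  have Q: "mat_adjoint P \<in> carrier_mat N N" using P by simp
  have Be: "B = mat_adjoint P * \<rho> * P"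
  proof -
    have PB: "P * B \<in> carrier_mat N N" using P B by simp
    have "mat_adjoint P * \<rho> = mat_adjoint P * (P * B * mat_adjoint P)" using re by simp
    also have "\<dots> = (mat_adjoint P * (P * B)) * mat_adjoint P"
      using assoc_mult_mat[OF Q PB Q] by simp
    also have "mat_adjoint P * (P * B) = (mat_adjoint P * P) * B"
      using assoc_mult_mat[OF Q P B] by simp
    also have "\<dots> = B" unfolding QP using B by simp
    finally have "mat_adjoint P * \<rho> * P = B * mat_adjoint P * P" by simp
    also have "\<dots> = B * (mat_adjoint P * P)" using assoc_mult_mat[OF B Q P] by simp
    also have "\<dots> = B" unfolding QP using B by simp
    finally show ?thesis by simp
  qed
  have Bh: "mat_adjoint B = B"
  proof -
    have "mat_adjoint B = mat_adjoint (mat_adjoint P * (\<rho> * P))" unfolding Be using assoc_mult_mat[OF Q rc P] by simp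
    also have "\<dots> = mat_adjoint (\<rho> * P) * mat_adjoint (mat_adjoint P)"
      by (rule adj_mult[of _ N N _ N]) (use P rc in auto)
    also have "mat_adjoint (\<rho> * P) = mat_adjoint P * mat_adjoint \<rho>"
      by (rule adj_mult[of _ N N _ N]) (use P rc in auto)
    finally show ?thesis unfolding herm adj_adj using assoc_mult_mat[OF Q rc P] Be by simp
  qed
  have Bd: "\<And>a m. a < N \<Longrightarrow> m < N \<Longrightarrow> B $$ (a,m) = (if a = m then complex_of_real (ev!m) else 0)"
  proof -
    fix a m assume a: "a < N" and m: "m < N"
    have len: "length ev = N" using arg_cong[OF dg, of length] B by (simp add: diag_mat_def)
    show "B $$ (a,m) = (if a = m then complex_of_real (ev!m) else 0)"
    proof (cases "a = m")
      case True
      then show ?thesis using arg_cong[OF dg, of "\<lambda>l. l ! m"] m B len by (simp add: diag_mat_def)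
    next
      case False
      show ?thesis
      proof (cases "m < a")
        case True
        then show ?thesis using ut a B False unfolding upper_triangular_def by auto
      next
        case ma: False
        then have "a < m" using False by simp
        then have "B $$ (m,a) = 0" using ut m B unfolding upper_triangular_def by auto
        moreover have "B $$ (a,m) = cnj (B $$ (m,a))"
          using arg_cong[OF Bh, of "\<lambda>M. M $$ (a,m)"] a m B by simp
        ultimately show ?thesis using False by simp
      qed
    qed
  qed
  have "\<forall>i<N. \<forall>k<N. \<rho> $$ (i,k) = (\<Sum>j<N. P$$(i,j) * complex_of_real (ev!j) * cnj (P$$(k,j)))"
  proof (intro allI impI)
    fix i k assume i: "i < N" and k: "k < N"
    have "\<rho> $$ (i,k) = (\<Sum>m<N. (P * B) $$ (i,m) * mat_adjoint P $$ (m,k))"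
      unfolding re using i k P B by (subst mult_idx) auto
    also have "\<dots> = (\<Sum>m<N. (\<Sum>a<N. P $$ (i,a) * B $$ (a,m)) * cnj (P $$ (k,m)))"
      using i k P B by (intro sum.cong refl) (subst mult_idx, auto)
    also have "\<dots> = (\<Sum>m<N. P$$(i,m) * complex_of_real (ev!m) * cnj (P$$(k,m)))"
    proof (intro sum.cong refl)
      fix m assume m: "m \<in> {..<N}"
      have "(\<Sum>a<N. P $$ (i,a) * B $$ (a,m)) = (\<Sum>a<N. if a = m then P $$ (i,m) * complex_of_real (ev!m) else 0)"
        using Bd m by (intro sum.cong refl) auto
      also have "\<dots> = P $$ (i,m) * complex_of_real (ev!m)" using m by simp
      finally show "(\<Sum>a<N. P $$ (i,a) * B $$ (a,m)) * cnj (P $$ (k,m)) = P$$(i,m) * complex_of_real (ev!m) * cnj (P$$(k,m))" by simp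
    qed
    finally show "\<rho> $$ (i,k) = (\<Sum>j<N. P$$(i,j) * complex_of_real (ev!j) * cnj (P$$(k,j)))" .
  qed
  moreover have "unitary_mat N P" unfolding unitary_mat_def using P PQ QP by auto
  ultimately show ?thesis by blast
qed


lemma lagrange_id:
  fixes f g :: "nat \<Rightarrow> real"
  shows "(\<Sum>i\<in>S. \<Sum>j\<in>S. (f i * g j - f j * g i)^2)
     = 2 * ((\<Sum>i\<in>S. (f i)^2) * (\<Sum>j\<in>S. (g j)^2)) - 2 * (\<Sum>i\<in>S. f i * g i)^2"
proof -
  have e: "\<And>i j. (f i * g j - f j * g i)^2 = (f i)^2 * (g j)^2 + (f j)^2 * (g i)^2 - 2 * ((f i * g i) * (f j * g j))"
    by (simp add: power2_eq_square algebra_simps)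
  have a: "(\<Sum>i\<in>S. \<Sum>j\<in>S. (f i)^2 * (g j)^2) = (\<Sum>i\<in>S. (f i)^2) * (\<Sum>j\<in>S. (g j)^2)"
    by (simp add: sum_product)
  have b: "(\<Sum>i\<in>S. \<Sum>j\<in>S. (f j)^2 * (g i)^2) = (\<Sum>i\<in>S. (f i)^2) * (\<Sum>j\<in>S. (g j)^2)"
    by (subst sum.swap) (simp add: sum_product)
  have c: "(\<Sum>i\<in>S. \<Sum>j\<in>S. (f i * g i) * (f j * g j)) = (\<Sum>i\<in>S. f i * g i)^2"
    by (simp add: sum_product power2_eq_square)
  have d: "(\<Sum>i\<in>S. \<Sum>j\<in>S. (f i)^2 * (g j)^2 + (f j)^2 * (g i)^2 - 2 * ((f i * g i) * (f j * g j)))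
     = (\<Sum>i\<in>S. \<Sum>j\<in>S. (f i)^2 * (g j)^2) + (\<Sum>i\<in>S. \<Sum>j\<in>S. (f j)^2 * (g i)^2)
       - 2 * (\<Sum>i\<in>S. \<Sum>j\<in>S. (f i * g i) * (f j * g j))"
    by (simp add: sum_subtractf sum.distrib sum_distrib_left)
  show ?thesis unfolding e d a b c by simp
qed

lemma cs_sq:
  fixes f g :: "nat \<Rightarrow> real"
  shows "(\<Sum>i\<in>S. f i * g i)^2 \<le> (\<Sum>i\<in>S. (f i)^2) * (\<Sum>i\<in>S. (g i)^2)"
proof -
  have "0 \<le> (\<Sum>i\<in>S. \<Sum>j\<in>S. (f i * g j - f j * g i)^2)" by (intro sum_nonneg) auto
  then show ?thesis unfolding lagrange_id by simp
qed

lemma cs_real: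
  fixes f g :: "nat \<Rightarrow> real"
  shows "(\<Sum>i\<in>S. f i * g i) \<le> sqrt (\<Sum>i\<in>S. (f i)^2) * sqrt (\<Sum>i\<in>S. (g i)^2)"
proof -
  have "(\<Sum>i\<in>S. f i * g i) \<le> sqrt ((\<Sum>i\<in>S. f i * g i)^2)" by simp
  also have "\<dots> \<le> sqrt ((\<Sum>i\<in>S. (f i)^2) * (\<Sum>i\<in>S. (g i)^2))"
    by (rule real_sqrt_le_mono[OF cs_sq])
  also have "\<dots> = sqrt (\<Sum>i\<in>S. (f i)^2) * sqrt (\<Sum>i\<in>S. (g i)^2)" by (simp add: real_sqrt_mult)
  finally show ?thesis .
qed

lemma cs_cmod:
  fixes a b :: "nat \<Rightarrow> complex"
  shows "cmod (\<Sum>i\<in>S. cnj (a i) * b i) \<le> sqrt (\<Sum>i\<in>S. (cmod (a i))^2) * sqrt (\<Sum>i\<in>S. (cmod (b i))^2)"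
proof -
  have "cmod (\<Sum>i\<in>S. cnj (a i) * b i) \<le> (\<Sum>i\<in>S. cmod (cnj (a i) * b i))" by (rule norm_sum)
  also have "\<dots> = (\<Sum>i\<in>S. cmod (a i) * cmod (b i))" by (simp add: norm_mult)
  also have "\<dots> \<le> sqrt (\<Sum>i\<in>S. (cmod (a i))^2) * sqrt (\<Sum>i\<in>S. (cmod (b i))^2)" by (rule cs_real)
  finally show ?thesis .
qed

lemma cmod_add_sq: "(cmod (a + b))^2 = (cmod a)^2 + (cmod b)^2 + 2 * Re (cnj a * b)"
  unfolding cmod_power2 by (simp add: power2_eq_square algebra_simps)

lemma cmod_sq_complex: "complex_of_real ((cmod z)^2) = z * cnj z"
  by (rule complex_norm_square)

lemma rownorm:
  fixes a :: "nat \<Rightarrow> complex"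
  assumes H: "\<forall>r<k. \<forall>s<k. (\<Sum>l<m. H r l * cnj (H s l)) = (if r = s then 1 else 0)"
  shows "(\<Sum>l<m. (cmod (\<Sum>r<k. a r * H r l))^2) = (\<Sum>r<k. (cmod (a r))^2)"
proof -
  have "complex_of_real (\<Sum>l<m. (cmod (\<Sum>r<k. a r * H r l))^2)
      = (\<Sum>l<m. (\<Sum>r<k. a r * H r l) * cnj (\<Sum>s<k. a s * H s l))"
    by (simp only: of_real_sum cmod_sq_complex)
  also have "\<dots> = (\<Sum>l<m. \<Sum>r<k. \<Sum>s<k. (a r * cnj (a s)) * (H r l * cnj (H s l)))"
    by (simp add: sum_product algebra_simps)
  also have "\<dots> = (\<Sum>r<k. \<Sum>s<k. (a r * cnj (a s)) * (\<Sum>l<m. H r l * cnj (H s l)))"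
    by (subst sum.swap) (simp add: sum_distrib_left sum.swap[of _ "{..<m}"])
  also have "\<dots> = (\<Sum>r<k. \<Sum>s<k. (a r * cnj (a s)) * (if r = s then 1 else 0))"
    using H by (intro sum.cong refl) auto
  also have "\<dots> = (\<Sum>r<k. a r * cnj (a r))" by (simp add: if_distrib cong: if_cong)
  also have "\<dots> = complex_of_real (\<Sum>r<k. (cmod (a r))^2)" by (simp only: of_real_sum cmod_sq_complex)
  finally show ?thesis by (simp only: of_real_eq_iff)
qed


definition nrm :: "nat \<Rightarrow> (nat \<Rightarrow> complex) \<Rightarrow> real" where
  "nrm N x = (\<Sum>i<N. (cmod (x i))^2)"

definition ip :: "nat \<Rightarrow> (nat \<Rightarrow> complex) \<Rightarrow> (nat \<Rightarrow> complex) \<Rightarrow> complex" where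
  "ip N x y = (\<Sum>i<N. cnj (x i) * y i)"

definition ad :: "nat \<Rightarrow> complex mat \<Rightarrow> (nat \<Rightarrow> complex) \<Rightarrow> nat \<Rightarrow> complex" where
  "ad N U \<phi> j = (\<Sum>i<N. cnj (U$$(i,j)) * \<phi> i)"

definition mv :: "nat \<Rightarrow> complex mat \<Rightarrow> (nat \<Rightarrow> complex) \<Rightarrow> nat \<Rightarrow> complex" where
  "mv N U y i = (\<Sum>j<N. U$$(i,j) * y j)"

definition sv :: "nat \<Rightarrow> complex mat \<Rightarrow> (nat \<Rightarrow> complex) \<Rightarrow> nat \<Rightarrow> complex" where
  "sv N U \<phi> t = (if t < N then \<phi> t else ad N U \<phi> (t - N))"

definition Ft :: "nat \<Rightarrow> complex mat \<Rightarrow> nat set \<Rightarrow> (nat \<Rightarrow> nat \<Rightarrow> complex) \<Rightarrow> nat \<Rightarrow> real" where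
  "Ft N U T Y k = (\<Sum>t\<in>T. \<Sum>l<k. (cmod (sv N U (\<lambda>i. Y i l) t))^2)"

definition rot :: "nat \<Rightarrow> (nat \<Rightarrow> nat \<Rightarrow> complex) \<Rightarrow> (nat \<Rightarrow> nat \<Rightarrow> complex) \<Rightarrow> nat \<Rightarrow> nat \<Rightarrow> complex" where
  "rot k Y H = (\<lambda>i l. \<Sum>r<k. Y i r * H r l)"

definition dropc :: "(nat \<Rightarrow> nat \<Rightarrow> complex) \<Rightarrow> nat \<Rightarrow> nat \<Rightarrow> complex" where
  "dropc Y = (\<lambda>i l. Y i (Suc l))"

definition opb :: "nat \<Rightarrow> complex mat \<Rightarrow> nat set \<Rightarrow> nat set \<Rightarrow> real \<Rightarrow> bool" where
  "opb N U I J c \<longleftrightarrow> (\<forall>x y. (\<forall>i. i \<notin> I \<longrightarrow> x i = 0) \<longrightarrow> (\<forall>j. j \<notin> J \<longrightarrow> y j = 0) \<longrightarrow>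
      cmod (ip N x (mv N U y)) \<le> c * sqrt (nrm N x) * sqrt (nrm N y))"

lemma nrm_nonneg[simp]: "0 \<le> nrm N x" unfolding nrm_def by (intro sum_nonneg) auto

lemma sv_lin: "sv N U (\<lambda>i. \<Sum>r<k. Y i r * z r) t = (\<Sum>r<k. sv N U (\<lambda>i. Y i r) t * z r)"
proof (cases "t < N")
  case True then show ?thesis unfolding sv_def by simp
next
  case False
  have "(\<Sum>i<N. cnj (U $$ (i, t - N)) * (\<Sum>r<k. Y i r * z r))
      = (\<Sum>r<k. (\<Sum>i<N. cnj (U $$ (i, t - N)) * Y i r) * z r)"
    by (simp add: sum_distrib_left sum_distrib_right sum.swap[of _ "{..<N}"] mult.assoc)
  then show ?thesis using False unfolding sv_def ad_def by simp
qed

lemma Ft_rot: assumes H: "ronc k k H"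
  shows "Ft N U T (rot k Y H) k = Ft N U T Y k"
proof -
  have H': "\<forall>r<k. \<forall>s<k. (\<Sum>l<k. H r l * cnj (H s l)) = (if r = s then 1 else 0)"
    using H unfolding ronc_def by blast
  have pt: "(\<Sum>l<k. (cmod (sv N U (\<lambda>i. rot k Y H i l) t))^2) = (\<Sum>l<k. (cmod (sv N U (\<lambda>i. Y i l) t))^2)" for t
  proof -
    have "(\<Sum>l<k. (cmod (sv N U (\<lambda>i. rot k Y H i l) t))^2)
        = (\<Sum>l<k. (cmod (\<Sum>r<k. sv N U (\<lambda>i. Y i r) t * H r l))^2)"
      unfolding rot_def sv_lin by simp
    also have "\<dots> = (\<Sum>r<k. (cmod (sv N U (\<lambda>i. Y i r) t))^2)" by (rule rownorm[OF H'])
    finally show ?thesis .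
  qed
  show ?thesis unfolding Ft_def using pt by simp
qed

lemma onc_rot: assumes Y: "onc N k Y" and H: "onc k k H"
  shows "onc N k (rot k Y H)"
  unfolding onc_def
proof (intro allI impI)
  fix a b assume a: "a < k" and b: "b < k"
  have "(\<Sum>i<N. cnj (rot k Y H i a) * rot k Y H i b)
     = (\<Sum>i<N. \<Sum>s<k. \<Sum>r<k. (cnj (H r a) * H s b) * (cnj (Y i r) * Y i s))"
    unfolding rot_def by (simp add: sum_product algebra_simps)
  also have "\<dots> = (\<Sum>s<k. \<Sum>r<k. (cnj (H r a) * H s b) * (\<Sum>i<N. cnj (Y i r) * Y i s))"
    by (subst sum.swap) (simp add: sum_distrib_left sum.swap[of _ "{..<N}"])
  also have "\<dots> = (\<Sum>s<k. \<Sum>r<k. (cnj (H r a) * H s b) * (if r = s then 1 else 0))"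
    using Y unfolding onc_def by (intro sum.cong refl) auto
  also have "\<dots> = (\<Sum>r<k. cnj (H r a) * H r b)" by (simp add: if_distrib cong: if_cong)
  also have "\<dots> = (if a = b then 1 else 0)" using H a b unfolding onc_def by blast
  finally show "(\<Sum>i<N. cnj (rot k Y H i a) * rot k Y H i b) = (if a = b then 1 else 0)" .
qed

lemma Ft_Suc: "Ft N U T Y (Suc k) = (\<Sum>t\<in>T. (cmod (sv N U (\<lambda>i. Y i 0) t))^2) + Ft N U T (dropc Y) k"
  unfolding Ft_def dropc_def sum.lessThan_Suc_shift by (simp add: sum.distrib)

lemma onc_dropc: "onc N (Suc k) Y \<Longrightarrow> onc N k (dropc Y)"
  unfolding onc_def dropc_def by auto

lemma Ft_nonneg: "0 \<le> Ft N U T Y k" unfolding Ft_def by (intro sum_nonneg) auto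

lemma sum_sv_split:
  assumes fin: "finite T"
  shows "(\<Sum>t\<in>T. (cmod (sv N U \<phi> t))^2)
    = (\<Sum>i\<in>{t\<in>T. t < N}. (cmod (\<phi> i))^2) + (\<Sum>j\<in>(\<lambda>t. t - N) ` {t\<in>T. N \<le> t}. (cmod (ad N U \<phi> j))^2)"
proof -
  have T: "T = {t\<in>T. t < N} \<union> {t\<in>T. N \<le> t}" by auto
  have "(\<Sum>t\<in>T. (cmod (sv N U \<phi> t))^2) = (\<Sum>t\<in>{t\<in>T. t < N}. (cmod (sv N U \<phi> t))^2) + (\<Sum>t\<in>{t\<in>T. N \<le> t}. (cmod (sv N U \<phi> t))^2)"
    by (subst T, rule sum.union_disjoint) (use fin in auto)
  also have "(\<Sum>t\<in>{t\<in>T. t < N}. (cmod (sv N U \<phi> t))^2) = (\<Sum>i\<in>{t\<in>T. t < N}. (cmod (\<phi> i))^2)"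
    unfolding sv_def by (intro sum.cong refl) auto
  also have "(\<Sum>t\<in>{t\<in>T. N \<le> t}. (cmod (sv N U \<phi> t))^2) = (\<Sum>t\<in>{t\<in>T. N \<le> t}. (cmod (ad N U \<phi> (t - N)))^2)"
    unfolding sv_def by (intro sum.cong refl) auto
  also have "\<dots> = (\<Sum>j\<in>(\<lambda>t. t - N) ` {t\<in>T. N \<le> t}. (cmod (ad N U \<phi> j))^2)"
    by (rule sum.reindex[symmetric, unfolded o_def]) (auto simp: inj_on_def)
  finally show ?thesis .
qed


lemma ip_mv_ad: "ip N \<phi> (mv N U y) = (\<Sum>j<N. cnj (ad N U \<phi> j) * y j)"
proof -
  have "ip N \<phi> (mv N U y) = (\<Sum>i<N. \<Sum>j<N. cnj (\<phi> i) * U$$(i,j) * y j)"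
    unfolding ip_def mv_def by (simp add: sum_distrib_left mult.assoc)
  also have "\<dots> = (\<Sum>j<N. \<Sum>i<N. cnj (\<phi> i) * U$$(i,j) * y j)" by (rule sum.swap)
  also have "\<dots> = (\<Sum>j<N. (\<Sum>i<N. cnj (\<phi> i) * U$$(i,j)) * y j)"
    by (simp add: sum_distrib_right)
  also have "\<dots> = (\<Sum>j<N. cnj (ad N U \<phi> j) * y j)" unfolding ad_def by (simp add: mult.commute)
  finally show ?thesis .
qed

lemma nrm_mv: assumes U: "unc N (\<lambda>i j. U$$(i,j))"
  shows "nrm N (mv N U y) = nrm N y"
proof -
  have H: "\<forall>r<N. \<forall>s<N. (\<Sum>l<N. U$$(l,r) * cnj (U$$(l,s))) = (if r = s then 1 else 0)"
  proof (intro allI impI)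
    fix r s assume "r < N" "s < N"
    then have "(\<Sum>i<N. cnj (U$$(i,r)) * U$$(i,s)) = (if r = s then 1 else 0)"
      using U unfolding unc_def onc_def by blast
    then have "cnj (\<Sum>i<N. cnj (U$$(i,r)) * U$$(i,s)) = (if r = s then 1 else 0)" by simp
    then show "(\<Sum>l<N. U$$(l,r) * cnj (U$$(l,s))) = (if r = s then 1 else 0)" by simp
  qed
  have "nrm N (mv N U y) = (\<Sum>l<N. (cmod (\<Sum>r<N. y r * U$$(l,r)))^2)"
    unfolding nrm_def mv_def by (simp add: mult.commute)
  also have "\<dots> = nrm N y" unfolding nrm_def by (rule rownorm[OF H])
  finally show ?thesis .
qed

lemma nrm_add: "nrm N (\<lambda>i. x i + w i) = nrm N x + nrm N w + 2 * Re (ip N x w)"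
  unfolding nrm_def ip_def cmod_add_sq by (simp add: sum.distrib sum_distrib_left)

lemma sum_restrict: "I \<subseteq> {..<(N::nat)} \<Longrightarrow> (\<Sum>i<N. if i \<in> I then g i else 0) = (\<Sum>i\<in>I. g i)"
  by (subst sum.inter_restrict[symmetric]) (auto intro: sum.cong simp: Int_absorb1)

lemma sum_supp: "I \<subseteq> {..<(N::nat)} \<Longrightarrow> (\<forall>i. i \<notin> I \<longrightarrow> g i = 0) \<Longrightarrow> (\<Sum>i<N. g i) = (\<Sum>i\<in>I. g i)"
  by (rule sum.mono_neutral_right) auto

lemma amgm_sqrt: "0 \<le> A \<Longrightarrow> 0 \<le> B \<Longrightarrow> 2 * (sqrt A * sqrt B) \<le> A + B"
proof -
  assume A: "0 \<le> A" and B: "0 \<le> B"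
  have "0 \<le> (sqrt A - sqrt B)^2" by simp
  also have "\<dots> = A + B - 2 * (sqrt A * sqrt B)" using A B by (simp add: power2_diff)
  finally show ?thesis by simp
qed

lemma single_upper:
  assumes U: "unc N (\<lambda>i j. U$$(i,j))" and I: "I \<subseteq> {..<N}" and J: "J \<subseteq> {..<N}"
    and ob: "opb N U I J c" and c0: "0 \<le> c" and n\<phi>: "nrm N \<phi> = 1"
  shows "(\<Sum>i\<in>I. (cmod (\<phi> i))^2) + (\<Sum>j\<in>J. (cmod (ad N U \<phi> j))^2) \<le> 1 + c"
proof -
  define x where "x i = (if i \<in> I then \<phi> i else 0)" for i
  define y where "y j = (if j \<in> J then ad N U \<phi> j else 0)" for j
  define A where "A = (\<Sum>i\<in>I. (cmod (\<phi> i))^2)"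
  define B where "B = (\<Sum>j\<in>J. (cmod (ad N U \<phi> j))^2)"
  have A0: "0 \<le> A" unfolding A_def by (intro sum_nonneg) auto
  have B0: "0 \<le> B" unfolding B_def by (intro sum_nonneg) auto
  have hA: "nrm N x = A" unfolding nrm_def x_def A_def
    by (subst sum_restrict[OF I, symmetric]) (intro sum.cong refl, auto)
  have hB: "nrm N y = B" unfolding nrm_def y_def B_def
    by (subst sum_restrict[OF J, symmetric]) (intro sum.cong refl, auto)
  have h1: "ip N \<phi> x = complex_of_real A"
  proof -
    have "ip N \<phi> x = (\<Sum>i<N. if i \<in> I then complex_of_real ((cmod (\<phi> i))^2) else 0)"
      unfolding ip_def x_def by (intro sum.cong refl) (auto simp: cnj_mult_self)
    also have "\<dots> = complex_of_real A" unfolding A_def sum_restrict[OF I] by simp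
    finally show ?thesis .
  qed
  have h2: "ip N \<phi> (mv N U y) = complex_of_real B"
  proof -
    have "ip N \<phi> (mv N U y) = (\<Sum>j<N. if j \<in> J then complex_of_real ((cmod (ad N U \<phi> j))^2) else 0)"
      unfolding ip_mv_ad y_def by (intro sum.cong refl) (auto simp: cnj_mult_self)
    also have "\<dots> = complex_of_real B" unfolding B_def sum_restrict[OF J] by simp
    finally show ?thesis .
  qed
  have h3: "ip N \<phi> (\<lambda>i. x i + mv N U y i) = complex_of_real (A + B)"
    unfolding ip_def using h1 h2 unfolding ip_def by (simp add: distrib_left sum.distrib)
  have "A + B = cmod (ip N \<phi> (\<lambda>i. x i + mv N U y i))" unfolding h3 norm_of_real using A0 B0 by simp
  also have "\<dots> \<le> sqrt (nrm N \<phi>) * sqrt (nrm N (\<lambda>i. x i + mv N U y i))"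
    unfolding ip_def nrm_def by (rule cs_cmod)
  also have "\<dots> = sqrt (nrm N (\<lambda>i. x i + mv N U y i))" using n\<phi> by simp
  finally have s1: "A + B \<le> sqrt (nrm N (\<lambda>i. x i + mv N U y i))" .
  have "nrm N (\<lambda>i. x i + mv N U y i) = A + B + 2 * Re (ip N x (mv N U y))"
    unfolding nrm_add nrm_mv[OF U] hA hB by simp
  also have "Re (ip N x (mv N U y)) \<le> c * sqrt A * sqrt B"
  proof -
    have "Re (ip N x (mv N U y)) \<le> cmod (ip N x (mv N U y))" by (rule complex_Re_le_cmod)
    also have "\<dots> \<le> c * sqrt (nrm N x) * sqrt (nrm N y)"
      using ob unfolding opb_def by (auto simp: x_def y_def)
    finally show ?thesis unfolding hA hB .
  qed
  also have "c * sqrt A * sqrt B \<le> c * ((A + B) / 2)"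
    using amgm_sqrt[OF A0 B0] c0 by (simp add: mult_left_mono mult.assoc)
  finally have s2: "nrm N (\<lambda>i. x i + mv N U y i) \<le> (1 + c) * (A + B)" by (simp add: field_simps)
  have "(A + B)^2 \<le> (1 + c) * (A + B)"
  proof -
    have "(A + B)^2 \<le> (sqrt (nrm N (\<lambda>i. x i + mv N U y i)))^2"
      using s1 A0 B0 by (intro power_mono) auto
    also have "\<dots> = nrm N (\<lambda>i. x i + mv N U y i)" by simp
    finally show ?thesis using s2 by simp
  qed
  then have "A + B \<le> 1 + c"
    using A0 B0 c0 by (cases "A + B = 0") (auto simp: power2_eq_square)
  then show ?thesis unfolding A_def B_def .
qed


lemma cs2: assumes "0 \<le> A" "0 \<le> B" "0 \<le> X" "0 \<le> Y"
  shows "sqrt A * sqrt X + sqrt B * sqrt Y \<le> sqrt (A + B) * sqrt (X + Y)"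
proof -
  let ?a = "sqrt A" and ?b = "sqrt B" and ?p = "sqrt X" and ?q = "sqrt Y"
  have "(?a * ?p + ?b * ?q)^2 \<le> (?a^2 + ?b^2) * (?p^2 + ?q^2)"
    using L2_set_mult_ineq_lemma[of ?a ?p ?b ?q]
    by (simp add: power2_sum power_mult_distrib algebra_simps)
  also have "\<dots> = (A + B) * (X + Y)" using assms by simp
  finally have "(?a * ?p + ?b * ?q)^2 \<le> (sqrt (A + B) * sqrt (X + Y))^2"
    using assms by (simp add: power_mult_distrib)
  moreover have "0 \<le> sqrt (A + B) * sqrt (X + Y)" using assms by simp
  ultimately show ?thesis by (rule power2_le_imp_le)
qed

lemma ip_self: "ip N \<phi> \<phi> = complex_of_real (nrm N \<phi>)"
  unfolding ip_def nrm_def by (simp add: cnj_mult_self)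

lemma single_lower:
  assumes U: "unc N (\<lambda>i j. U$$(i,j))" and I: "I \<subseteq> {..<N}" and J: "J \<subseteq> {..<N}"
    and ob: "opb N U I J c" and c0: "0 \<le> c"
    and xs: "\<forall>i. i \<notin> I \<longrightarrow> x i = 0" and ys: "\<forall>j. j \<notin> J \<longrightarrow> y j = 0"
    and \<phi>: "\<forall>i<N. \<phi> i = x i + mv N U y i" and n\<phi>: "nrm N \<phi> = 1"
  shows "1 - c \<le> (\<Sum>i\<in>I. (cmod (\<phi> i))^2) + (\<Sum>j\<in>J. (cmod (ad N U \<phi> j))^2)"
proof -
  define A where "A = (\<Sum>i\<in>I. (cmod (\<phi> i))^2)"
  define B where "B = (\<Sum>j\<in>J. (cmod (ad N U \<phi> j))^2)"
  define X where "X = nrm N x"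
  define Y where "Y = nrm N y"
  have A0: "0 \<le> A" unfolding A_def by (intro sum_nonneg) auto
  have B0: "0 \<le> B" unfolding B_def by (intro sum_nonneg) auto
  have X0: "0 \<le> X" unfolding X_def by simp
  have Y0: "0 \<le> Y" unfolding Y_def by simp
  show ?thesis
  proof (cases "1 \<le> c")
    case True
    then show ?thesis using A0 B0 unfolding A_def B_def by simp
  next
    case False
    then have c1: "0 < 1 - c" by simp
    have "1 = nrm N (\<lambda>i. x i + mv N U y i)" unfolding n\<phi>[symmetric] nrm_def using \<phi> by simp
    also have "\<dots> = X + Y + 2 * Re (ip N x (mv N U y))"
      unfolding nrm_add nrm_mv[OF U] X_def Y_def by simp
    finally have e1: "1 = X + Y + 2 * Re (ip N x (mv N U y))" .
    have "- Re (ip N x (mv N U y)) \<le> cmod (ip N x (mv N U y))"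
      using complex_Re_le_cmod[of "- ip N x (mv N U y)"] by simp
    also have "\<dots> \<le> c * sqrt X * sqrt Y" using ob xs ys unfolding opb_def X_def Y_def by blast
    also have "\<dots> \<le> c * ((X + Y) / 2)"
      using amgm_sqrt[OF X0 Y0] c0 by (simp add: mult_left_mono mult.assoc)
    finally have "(1 - c) * (X + Y) \<le> 1" using e1 by (simp add: field_simps)
    then have e2: "(1 - c) * (X + Y) \<le> 1" .
    have ipx: "cmod (ip N \<phi> x) \<le> sqrt A * sqrt X"
    proof -
      have "ip N \<phi> x = (\<Sum>i\<in>I. cnj (\<phi> i) * x i)" unfolding ip_def
        by (rule sum_supp[OF I]) (use xs in auto)
      moreover have "X = (\<Sum>i\<in>I. (cmod (x i))^2)" unfolding X_def nrm_def
        by (rule sum_supp[OF I]) (use xs in auto)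
      ultimately show ?thesis unfolding A_def using cs_cmod[of \<phi> x I] by simp
    qed
    have ipy: "cmod (ip N \<phi> (mv N U y)) \<le> sqrt B * sqrt Y"
    proof -
      have "ip N \<phi> (mv N U y) = (\<Sum>j\<in>J. cnj (ad N U \<phi> j) * y j)" unfolding ip_mv_ad
        by (rule sum_supp[OF J]) (use ys in auto)
      moreover have "Y = (\<Sum>j\<in>J. (cmod (y j))^2)" unfolding Y_def nrm_def
        by (rule sum_supp[OF J]) (use ys in auto)
      ultimately show ?thesis unfolding B_def using cs_cmod[of "ad N U \<phi>" y J] by simp
    qed
    have "ip N \<phi> \<phi> = ip N \<phi> (\<lambda>i. x i + mv N U y i)" unfolding ip_def using \<phi> by simp
    also have "\<dots> = ip N \<phi> x + ip N \<phi> (mv N U y)" unfolding ip_def by (simp add: distrib_left sum.distrib)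
    finally have "1 = cmod (ip N \<phi> x + ip N \<phi> (mv N U y))" unfolding ip_self n\<phi> by simp
    also have "\<dots> \<le> cmod (ip N \<phi> x) + cmod (ip N \<phi> (mv N U y))" by (rule norm_triangle_ineq)
    also have "\<dots> \<le> sqrt A * sqrt X + sqrt B * sqrt Y" using ipx ipy by simp
    also have "\<dots> \<le> sqrt (A + B) * sqrt (X + Y)" by (rule cs2[OF A0 B0 X0 Y0])
    also have "\<dots> = sqrt ((A + B) * (X + Y))" by (simp add: real_sqrt_mult)
    finally have "1 \<le> sqrt ((A + B) * (X + Y))" .
    then have e3: "1 \<le> (A + B) * (X + Y)"
      using real_sqrt_le_iff[of 1 "(A + B) * (X + Y)"] by simp
    have "1 - c \<le> (1 - c) * ((A + B) * (X + Y))" using e3 c1 by (simp add: mult_le_cancel_left1)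
    also have "\<dots> = (A + B) * ((1 - c) * (X + Y))" by (simp add: algebra_simps)
    also have "\<dots> \<le> (A + B) * 1" using e2 A0 B0 by (intro mult_left_mono) auto
    finally show ?thesis unfolding A_def B_def by simp
  qed
qed


lemma pick_bij: assumes "finite S" shows "bij_betw (pick S) {..<card S} S"
proof -
  have inj: "inj_on (pick S) {..<card S}"
  proof (rule inj_onI)
    fix a b assume a: "a \<in> {..<card S}" and b: "b \<in> {..<card S}" and e: "pick S a = pick S b"
    show "a = b"
    proof (rule ccontr)
      assume "a \<noteq> b"
      then have "a < b \<or> b < a" by auto
      then show False using pick_mono[of b S a] pick_mono[of a S b] a b e by auto
    qed
  qed
  have sub: "pick S ` {..<card S} \<subseteq> S" using pick_in_set by auto
  have "card (pick S ` {..<card S}) = card S" using card_image[OF inj] by simp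
  then have "pick S ` {..<card S} = S" using card_subset_eq[OF assms sub] by simp
  then show ?thesis using inj unfolding bij_betw_def by simp
qed

lemma sum_pick: "finite S \<Longrightarrow> (\<Sum>b<card S. f (pick S b)) = (\<Sum>j\<in>S. f j)"
  by (rule sum.reindex_bij_betw[OF pick_bij])

lemma set_lt_in: "I \<subseteq> {..<N} \<Longrightarrow> {i. i < N \<and> i \<in> I} = I" by auto

lemma sub_dims: assumes "U \<in> carrier_mat N N" "I \<subseteq> {..<N}" "J \<subseteq> {..<N}"
  shows "dim_row (submatrix U I J) = card I" "dim_col (submatrix U I J) = card J"
  using assms by (auto simp: dim_submatrix set_lt_in)

lemma sub_mv: assumes U: "U \<in> carrier_mat N N" and I: "I \<subseteq> {..<N}" and J: "J \<subseteq> {..<N}"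
  and v: "dim_vec v = card J" and a: "a < card I"
  shows "(submatrix U I J *\<^sub>v v) $ a = (\<Sum>b<card J. U $$ (pick I a, pick J b) * v $ b)"
proof -
  have d: "dim_row (submatrix U I J) = card I" "dim_col (submatrix U I J) = card J" using sub_dims[OF U I J] by auto
  have "(submatrix U I J *\<^sub>v v) $ a = (\<Sum>b<card J. submatrix U I J $$ (a,b) * v $ b)"
    using d a v by (subst mult_vec_idx) auto
  also have "\<dots> = (\<Sum>b<card J. U $$ (pick I a, pick J b) * v $ b)"
    using U I J a by (intro sum.cong refl) (subst submatrix_index, auto simp: set_lt_in)
  finally show ?thesis .
qed

lemma vnorm_sq: "(vnorm v)^2 = (\<Sum>i<dim_vec v. (cmod (v $ i))^2)"
proof -
  have "0 \<le> (\<Sum>i<dim_vec v. (cmod (v $ i))^2)" by (intro sum_nonneg) auto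
  then show ?thesis unfolding vnorm_def by simp
qed

lemma vnorm_nonneg: "0 \<le> vnorm v"
proof -
  have "0 \<le> (\<Sum>i<dim_vec v. (cmod (v $ i))^2)" by (intro sum_nonneg) auto
  then show ?thesis unfolding vnorm_def by simp
qed

lemma vnorm_smult: "vnorm (k \<cdot>\<^sub>v v) = cmod k * vnorm v"
proof -
  have "(\<Sum>i<dim_vec v. (cmod ((k \<cdot>\<^sub>v v) $ i))^2) = (cmod k)^2 * (\<Sum>i<dim_vec v. (cmod (v $ i))^2)"
    by (simp add: sum_distrib_left norm_mult power_mult_distrib)
  then show ?thesis unfolding vnorm_def by (simp add: real_sqrt_mult)
qed

lemma vnorm_zero: "vnorm v = 0 \<Longrightarrow> v = 0\<^sub>v (dim_vec v)"
proof -
  assume "vnorm v = 0"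
  then have "(\<Sum>i<dim_vec v. (cmod (v $ i))^2) = 0" using vnorm_sq[of v] by simp
  then have "\<forall>i\<in>{..<dim_vec v}. (cmod (v $ i))^2 = 0" by (subst sum_nonneg_eq_0_iff[symmetric]) auto
  then show ?thesis by (intro eq_vecI) auto
qed

definition yext :: "nat set \<Rightarrow> complex vec \<Rightarrow> nat \<Rightarrow> complex" where
  "yext J v j = (if j \<in> J then v $ card {a\<in>J. a < j} else 0)"

lemma yext_pick: "finite J \<Longrightarrow> b < card J \<Longrightarrow> yext J v (pick J b) = v $ b"
  unfolding yext_def using pick_in_set[of b J] card_pick[of b J] by auto

lemma sub_mv_yext: assumes U: "U \<in> carrier_mat N N" and I: "I \<subseteq> {..<N}" and J: "J \<subseteq> {..<N}"
  and v: "dim_vec v = card J" and a: "a < card I"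
  shows "(submatrix U I J *\<^sub>v v) $ a = mv N U (yext J v) (pick I a)"
proof -
  have fJ: "finite J" using J finite_subset by blast
  have "(submatrix U I J *\<^sub>v v) $ a = (\<Sum>b<card J. U $$ (pick I a, pick J b) * yext J v (pick J b))"
    unfolding sub_mv[OF U I J v a] using yext_pick[OF fJ] by simp
  also have "\<dots> = (\<Sum>j\<in>J. U $$ (pick I a, j) * yext J v j)" by (rule sum_pick[OF fJ])
  also have "\<dots> = mv N U (yext J v) (pick I a)" unfolding mv_def
    by (rule sum_supp[symmetric, OF J]) (auto simp: yext_def)
  finally show ?thesis .
qed

lemma nrm_yext: assumes J: "J \<subseteq> {..<N}" and v: "dim_vec v = card J"
  shows "nrm N (yext J v) = (vnorm v)^2"
proof -
  have fJ: "finite J" using J finite_subset by blast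
  have "nrm N (yext J v) = (\<Sum>j\<in>J. (cmod (yext J v j))^2)" unfolding nrm_def
    by (rule sum_supp[OF J]) (auto simp: yext_def)
  also have "\<dots> = (\<Sum>b<card J. (cmod (yext J v (pick J b)))^2)" by (rule sum_pick[symmetric, OF fJ])
  also have "\<dots> = (\<Sum>b<card J. (cmod (v $ b))^2)" using yext_pick[OF fJ] by simp
  finally show ?thesis unfolding vnorm_sq v .
qed

lemma vnorm_sub_sq: assumes U: "U \<in> carrier_mat N N" and I: "I \<subseteq> {..<N}" and J: "J \<subseteq> {..<N}"
  and v: "dim_vec v = card J"
  shows "(vnorm (submatrix U I J *\<^sub>v v))^2 = (\<Sum>i\<in>I. (cmod (mv N U (yext J v) i))^2)"
proof -
  have fI: "finite I" using I finite_subset by blast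
  have "(vnorm (submatrix U I J *\<^sub>v v))^2 = (\<Sum>a<card I. (cmod ((submatrix U I J *\<^sub>v v) $ a))^2)"
    unfolding vnorm_sq using sub_dims[OF U I J] by simp
  also have "\<dots> = (\<Sum>a<card I. (cmod (mv N U (yext J v) (pick I a)))^2)"
    using sub_mv_yext[OF U I J v] by simp
  also have "\<dots> = (\<Sum>i\<in>I. (cmod (mv N U (yext J v) i))^2)" by (rule sum_pick[OF fI])
  finally show ?thesis .
qed

lemma sub_contract: assumes U: "U \<in> carrier_mat N N" and Uu: "unc N (\<lambda>i j. U$$(i,j))"
  and I: "I \<subseteq> {..<N}" and J: "J \<subseteq> {..<N}" and v: "dim_vec v = card J"
  shows "vnorm (submatrix U I J *\<^sub>v v) \<le> vnorm v"
proof -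
  have "(vnorm (submatrix U I J *\<^sub>v v))^2 \<le> nrm N (mv N U (yext J v))"
    unfolding vnorm_sub_sq[OF U I J v] nrm_def
    by (rule sum_mono2) (use I in auto)
  also have "\<dots> = (vnorm v)^2" unfolding nrm_mv[OF Uu] nrm_yext[OF J v] ..
  finally show ?thesis using vnorm_nonneg power2_le_imp_le by blast
qed


locale UU =
  fixes N :: nat and U :: "complex mat"
  assumes Uc: "U \<in> carrier_mat N N" and Uu: "unc N (\<lambda>i j. U$$(i,j))"
begin

lemma opn_set: assumes I: "I \<subseteq> {..<N}" and J: "J \<subseteq> {..<N}"
  shows "{vnorm (submatrix U I J *\<^sub>v v) | v. v \<in> carrier_vec (dim_col (submatrix U I J)) \<and> vnorm v \<le> 1}
     = {vnorm (submatrix U I J *\<^sub>v v) | v. v \<in> carrier_vec (card J) \<and> vnorm v \<le> 1}"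
  using sub_dims[OF Uc I J] by simp

lemma opn_bdd: assumes I: "I \<subseteq> {..<N}" and J: "J \<subseteq> {..<N}"
  shows "bdd_above {vnorm (submatrix U I J *\<^sub>v v) | v. v \<in> carrier_vec (card J) \<and> vnorm v \<le> 1}"
proof (rule bdd_aboveI[of _ 1])
  fix x assume "x \<in> {vnorm (submatrix U I J *\<^sub>v v) | v. v \<in> carrier_vec (card J) \<and> vnorm v \<le> 1}"
  then obtain v where "x = vnorm (submatrix U I J *\<^sub>v v)" "v \<in> carrier_vec (card J)" "vnorm v \<le> 1" by blast
  then show "x \<le> 1" using sub_contract[OF Uc Uu I J, of v] by auto
qed

lemma opn_ne: "{vnorm (submatrix U I J *\<^sub>v v) | v. v \<in> carrier_vec (card J) \<and> vnorm v \<le> 1} \<noteq> {}"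
proof -
  have "vnorm (0\<^sub>v (card J)) = 0" unfolding vnorm_def by simp
  then show ?thesis by (intro ex_in_conv[THEN iffD1] exI[of _ "vnorm (submatrix U I J *\<^sub>v 0\<^sub>v (card J))"]) auto
qed

lemma opn_upper: assumes I: "I \<subseteq> {..<N}" and J: "J \<subseteq> {..<N}"
  and v: "v \<in> carrier_vec (card J)" "vnorm v \<le> 1"
  shows "vnorm (submatrix U I J *\<^sub>v v) \<le> op_norm (submatrix U I J)"
  unfolding op_norm_def opn_set[OF I J]
  by (rule cSup_upper[OF _ opn_bdd[OF I J]]) (use v in blast)

lemma opn_nonneg: assumes I: "I \<subseteq> {..<N}" and J: "J \<subseteq> {..<N}"
  shows "0 \<le> op_norm (submatrix U I J)"
proof -
  have "vnorm (0\<^sub>v (card J)) = 0" unfolding vnorm_def by simp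
  then have "vnorm (submatrix U I J *\<^sub>v 0\<^sub>v (card J)) \<le> op_norm (submatrix U I J)"
    by (intro opn_upper[OF I J]) auto
  then show ?thesis using vnorm_nonneg order_trans by blast
qed

lemma opn_le1: assumes I: "I \<subseteq> {..<N}" and J: "J \<subseteq> {..<N}"
  shows "op_norm (submatrix U I J) \<le> 1"
  unfolding op_norm_def opn_set[OF I J]
proof (rule cSup_least[OF opn_ne])
  fix x assume "x \<in> {vnorm (submatrix U I J *\<^sub>v v) | v. v \<in> carrier_vec (card J) \<and> vnorm v \<le> 1}"
  then obtain v where "x = vnorm (submatrix U I J *\<^sub>v v)" "v \<in> carrier_vec (card J)" "vnorm v \<le> 1" by blast
  then show "x \<le> 1" using sub_contract[OF Uc Uu I J, of v] by auto
qed

lemma opn_bound: assumes I: "I \<subseteq> {..<N}" and J: "J \<subseteq> {..<N}" and v: "v \<in> carrier_vec (card J)"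
  shows "vnorm (submatrix U I J *\<^sub>v v) \<le> op_norm (submatrix U I J) * vnorm v"
proof (cases "vnorm v = 0")
  case True
  have "vnorm (submatrix U I J *\<^sub>v v) \<le> vnorm v" using sub_contract[OF Uc Uu I J] v by auto
  then show ?thesis using True vnorm_nonneg[of "submatrix U I J *\<^sub>v v"] by simp
next
  case False
  then have vp: "0 < vnorm v" using vnorm_nonneg[of v] by simp
  define w where "w = complex_of_real (1 / vnorm v) \<cdot>\<^sub>v v"
  have w: "w \<in> carrier_vec (card J)" using v unfolding w_def by simp
  have vw: "vnorm w = 1" unfolding w_def vnorm_smult norm_of_real using vp by simp
  have M: "submatrix U I J \<in> carrier_mat (card I) (card J)" unfolding carrier_mat_def using sub_dims[OF Uc I J] by simp
  have "submatrix U I J *\<^sub>v w = complex_of_real (1 / vnorm v) \<cdot>\<^sub>v (submatrix U I J *\<^sub>v v)"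
    unfolding w_def by (rule mult_mat_vec[OF M v])
  then have "vnorm (submatrix U I J *\<^sub>v w) = vnorm (submatrix U I J *\<^sub>v v) / vnorm v"
    using vp by (simp add: vnorm_smult norm_divide)
  moreover have "vnorm (submatrix U I J *\<^sub>v w) \<le> op_norm (submatrix U I J)"
    using opn_upper[OF I J w] vw by simp
  ultimately show ?thesis using vp by (simp add: divide_le_eq)
qed

lemma opb_sub: assumes I: "I \<subseteq> {..<N}" and J: "J \<subseteq> {..<N}"
  shows "opb N U I J (op_norm (submatrix U I J))"
  unfolding opb_def
proof (intro allI impI)
  fix x y :: "nat \<Rightarrow> complex" assume xs: "\<forall>i. i \<notin> I \<longrightarrow> x i = 0" and ys: "\<forall>j. j \<notin> J \<longrightarrow> y j = 0"
  have fI: "finite I" using I finite_subset by blast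
  have fJ: "finite J" using J finite_subset by blast
  define v :: "complex vec" where "v = vec (card J) (\<lambda>b. y (pick J b))"
  have vc: "v \<in> carrier_vec (card J)" unfolding v_def by simp
  have ye: "yext J v = y"
  proof
    fix j show "yext J v j = y j"
    proof (cases "j \<in> J")
      case True
      have "card {a\<in>J. a < j} < card J"
        by (rule psubset_card_mono[OF fJ]) (use True in auto)
      then show ?thesis using True pick_card_in_set[OF True] unfolding yext_def v_def by simp
    next
      case False then show ?thesis using ys unfolding yext_def by simp
    qed
  qed
  let ?M = "submatrix U I J"
  have "ip N x (mv N U y) = (\<Sum>i\<in>I. cnj (x i) * mv N U y i)" unfolding ip_def
    by (rule sum_supp[OF I]) (use xs in auto)
  also have "\<dots> = (\<Sum>a<card I. cnj (x (pick I a)) * mv N U y (pick I a))" by (rule sum_pick[symmetric, OF fI])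
  also have "\<dots> = (\<Sum>a<card I. cnj (x (pick I a)) * (?M *\<^sub>v v) $ a)"
    using sub_mv_yext[OF Uc I J, of v] vc ye by simp
  finally have e: "ip N x (mv N U y) = (\<Sum>a<card I. cnj (x (pick I a)) * (?M *\<^sub>v v) $ a)" .
  have "(\<Sum>a<card I. (cmod (x (pick I a)))^2) = (\<Sum>i\<in>I. (cmod (x i))^2)" by (rule sum_pick[OF fI])
  also have "\<dots> = nrm N x" unfolding nrm_def by (rule sum_supp[symmetric, OF I]) (use xs in auto)
  finally have nx: "(\<Sum>a<card I. (cmod (x (pick I a)))^2) = nrm N x" .
  have nMv: "(\<Sum>a<card I. (cmod ((?M *\<^sub>v v) $ a))^2) = (vnorm (?M *\<^sub>v v))^2"
    unfolding vnorm_sq using sub_dims[OF Uc I J] by simp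
  have ny: "vnorm v = sqrt (nrm N y)" using nrm_yext[OF J, of v] vc ye vnorm_nonneg[of v] by simp
  have "cmod (ip N x (mv N U y)) \<le> sqrt (nrm N x) * vnorm (?M *\<^sub>v v)"
    unfolding e using cs_cmod[of "\<lambda>a. x (pick I a)" "\<lambda>a. (?M *\<^sub>v v) $ a" "{..<card I}"]
    unfolding nx nMv using vnorm_nonneg[of "?M *\<^sub>v v"] by simp
  also have "\<dots> \<le> sqrt (nrm N x) * (op_norm ?M * vnorm v)"
    by (intro mult_left_mono opn_bound[OF I J vc]) simp
  finally show "cmod (ip N x (mv N U y)) \<le> op_norm ?M * sqrt (nrm N x) * sqrt (nrm N y)"
    unfolding ny by (simp add: algebra_simps)
qed

lemma opn_full: assumes J: "J \<subseteq> {..<N}" and Jne: "J \<noteq> {}"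
  shows "1 \<le> op_norm (submatrix U {..<N} J)"
proof -
  have fJ: "finite J" using J finite_subset by blast
  have cJ: "0 < card J" using Jne fJ by (simp add: card_gt_0_iff)
  define v where "v = vec (card J) (\<lambda>b. if b = 0 then (1::complex) else 0)"
  have vc: "v \<in> carrier_vec (card J)" unfolding v_def by simp
  have "(\<Sum>i<card J. (cmod (v $ i))^2) = (\<Sum>i<card J. if i = 0 then 1 else 0)"
    unfolding v_def by (intro sum.cong refl) auto
  also have "\<dots> = 1" using cJ by simp
  finally have "(vnorm v)^2 = 1" unfolding vnorm_sq using vc by simp
  then have v1: "vnorm v = 1" using vnorm_nonneg[of v] by (simp add: power2_eq_1_iff)
  have "(vnorm (submatrix U {..<N} J *\<^sub>v v))^2 = nrm N (mv N U (yext J v))"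
    using vnorm_sub_sq[OF Uc order_refl J, of v] vc unfolding nrm_def by simp
  also have "\<dots> = 1" using nrm_mv[OF Uu] nrm_yext[OF J, of v] vc v1 by simp
  finally have "vnorm (submatrix U {..<N} J *\<^sub>v v) = 1"
    using vnorm_nonneg[of "submatrix U {..<N} J *\<^sub>v v"] by (simp add: power2_eq_1_iff)
  then show ?thesis using opn_upper[OF order_refl J vc] v1 by simp
qed

end


lemma kernel_set:
  fixes M :: "nat \<Rightarrow> 'a \<Rightarrow> complex"
  assumes fS: "finite S" and rc: "r < card S"
  shows "\<exists>z. (\<exists>l\<in>S. z l \<noteq> 0) \<and> (\<forall>i<r. (\<Sum>l\<in>S. M i l * z l) = 0)"
proof -
  obtain h where h: "bij_betw h {..<card S} S" using ex_bij_betw_nat_finite[OF fS] atLeast0LessThan by metis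
  obtain w where w: "\<exists>l<card S. w l \<noteq> 0" "\<forall>i<r. (\<Sum>l<card S. M i (h l) * w l) = 0"
    using kernel_fun[OF rc, of "\<lambda>i l. M i (h l)"] by blast
  define z where "z l = w (the_inv_into {..<card S} h l)" for l
  have zh: "\<And>l. l < card S \<Longrightarrow> z (h l) = w l"
    unfolding z_def using h by (simp add: bij_betw_def the_inv_into_f_f)
  have "\<exists>l\<in>S. z l \<noteq> 0"
  proof -
    obtain l where "l < card S" "w l \<noteq> 0" using w(1) by blast
    then show ?thesis using zh[of l] h by (metis bij_betwE lessThan_iff)
  qed
  moreover have "\<forall>i<r. (\<Sum>l\<in>S. M i l * z l) = 0"
  proof (intro allI impI)
    fix i assume i: "i < r"
    have "(\<Sum>l\<in>S. M i l * z l) = (\<Sum>l<card S. M i (h l) * z (h l))"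
      by (rule sum.reindex_bij_betw[symmetric, OF h])
    also have "\<dots> = (\<Sum>l<card S. M i (h l) * w l)" using zh by simp
    finally show "(\<Sum>l\<in>S. M i l * z l) = 0" using w(2) i by simp
  qed
  ultimately show ?thesis by blast
qed

context UU begin

definition sset :: "nat \<Rightarrow> real set" where
  "sset k = {op_norm (submatrix U I J) | I J. I \<subseteq> {..<N} \<and> J \<subseteq> {..<N} \<and> card I + card J = k + 1}"

lemma s_val_sset: "s_val N U k = Max (sset k)" unfolding s_val_def sset_def ..

lemma sset_fin: "finite (sset k)"
proof -
  have "sset k \<subseteq> (\<lambda>(I,J). op_norm (submatrix U I J)) ` (Pow {..<N} \<times> Pow {..<N})"
    unfolding sset_def by auto
  then show ?thesis by (rule finite_subset) auto
qed

lemma s_ge: assumes "I \<subseteq> {..<N}" "J \<subseteq> {..<N}" "card I + card J = k + 1"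
  shows "op_norm (submatrix U I J) \<le> s_val N U k"
  unfolding s_val_sset by (rule Max_ge[OF sset_fin]) (use assms in \<open>auto simp: sset_def\<close>)

lemma s_eq1: assumes "N \<le> k" "k < 2 * N"
  shows "s_val N U k = 1"
proof -
  define J where "J = {..<k + 1 - N}"
  have J: "J \<subseteq> {..<N}" using assms unfolding J_def by auto
  have "0 \<in> J" using assms unfolding J_def by simp
  then have Jne: "J \<noteq> {}" by blast
  have c: "card {..<N} + card J = k + 1" using assms unfolding J_def by simp
  have mem: "op_norm (submatrix U {..<N} J) \<in> sset k" unfolding sset_def using J c by blast
  have le: "\<forall>x\<in>sset k. x \<le> 1" unfolding sset_def using opn_le1 by auto
  have "Max (sset k) \<le> 1" using le mem sset_fin by (subst Max_le_iff) auto
  moreover have "1 \<le> Max (sset k)"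
    using opn_full[OF J Jne] Max_ge[OF sset_fin mem] by simp
  ultimately show ?thesis unfolding s_val_sset by simp
qed

lemma card_IJ: assumes fin: "finite T"
  shows "card {t\<in>T. t < N} + card ((\<lambda>t. t - N) ` {t\<in>T. N \<le> t}) = card T"
proof -
  have "card ((\<lambda>t. t - N) ` {t\<in>T. N \<le> t}) = card {t\<in>T. N \<le> t}"
    by (rule card_image) (auto simp: inj_on_def)
  moreover have "card T = card {t\<in>T. t < N} + card {t\<in>T. N \<le> t}"
  proof -
    have "T = {t\<in>T. t < N} \<union> {t\<in>T. N \<le> t}" by auto
    then have "card T = card ({t\<in>T. t < N} \<union> {t\<in>T. N \<le> t})" by simp
    also have "\<dots> = card {t\<in>T. t < N} + card {t\<in>T. N \<le> t}"
      by (rule card_Un_disjoint) (use fin in auto)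
    finally show ?thesis .
  qed
  ultimately show ?thesis by simp
qed

lemma IJ_sub: assumes "T \<subseteq> {..<2*N}"
  shows "{t\<in>T. t < N} \<subseteq> {..<N}" "(\<lambda>t. t - N) ` {t\<in>T. N \<le> t} \<subseteq> {..<N}"
  using assms by auto

lemma single_upper_T:
  assumes T: "T \<subseteq> {..<2*N}" and n\<phi>: "nrm N \<phi> = 1" and cT: "card T = j + 1"
  shows "(\<Sum>t\<in>T. (cmod (sv N U \<phi> t))^2) \<le> 1 + s_val N U j"
proof -
  let ?I = "{t\<in>T. t < N}" and ?J = "(\<lambda>t. t - N) ` {t\<in>T. N \<le> t}"
  have fT: "finite T" using T finite_subset by blast
  have "(\<Sum>t\<in>T. (cmod (sv N U \<phi> t))^2) = (\<Sum>i\<in>?I. (cmod (\<phi> i))^2) + (\<Sum>j\<in>?J. (cmod (ad N U \<phi> j))^2)"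
    by (rule sum_sv_split[OF fT])
  also have "\<dots> \<le> 1 + op_norm (submatrix U ?I ?J)"
    by (rule single_upper[OF Uu IJ_sub[OF T] opb_sub[OF IJ_sub[OF T]] opn_nonneg[OF IJ_sub[OF T]] n\<phi>])
  also have "op_norm (submatrix U ?I ?J) \<le> s_val N U j"
    by (rule s_ge[OF IJ_sub[OF T]]) (use card_IJ[OF fT] cT in simp)
  finally show ?thesis by simp
qed

end


lemma normalize_vec:
  fixes z :: "nat \<Rightarrow> complex"
  assumes "\<exists>l<m. z l \<noteq> 0"
  shows "0 < (\<Sum>l<m. (cmod (z l))^2)"
    and "(\<Sum>l<m. (cmod (z l / complex_of_real (sqrt (\<Sum>l<m. (cmod (z l))^2))))^2) = 1"
proof -
  define s where "s = (\<Sum>l<m. (cmod (z l))^2)"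
  obtain l where l: "l < m" "z l \<noteq> 0" using assms by blast
  have "(cmod (z l))^2 \<le> s" unfolding s_def by (rule member_le_sum) (use l in auto)
  moreover have "0 < (cmod (z l))^2" using l by simp
  ultimately have s0: "0 < s" by linarith
  then show "0 < (\<Sum>l<m. (cmod (z l))^2)" unfolding s_def .
  have "(\<Sum>l<m. (cmod (z l / complex_of_real (sqrt s)))^2) = (\<Sum>l<m. (cmod (z l))^2 / s)"
    using s0 by (intro sum.cong refl) (simp add: norm_divide power_divide)
  also have "\<dots> = (\<Sum>l<m. (cmod (z l))^2) / s" by (rule sum_divide_distrib[symmetric])
  also have "\<dots> = s / s" unfolding s_def ..
  also have "\<dots> = 1" using s0 by simp
  finally show "(\<Sum>l<m. (cmod (z l / complex_of_real (sqrt (\<Sum>l<m. (cmod (z l))^2))))^2) = 1"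
    unfolding s_def .
qed

lemma onc_col0_nrm: assumes "onc N (Suc k) Y" shows "nrm N (\<lambda>i. Y i 0) = 1"
proof -
  have "(\<Sum>i<N. cnj (Y i 0) * Y i 0) = 1" using assms unfolding onc_def by auto
  then have "ip N (\<lambda>i. Y i 0) (\<lambda>i. Y i 0) = 1" unfolding ip_def .
  then show ?thesis unfolding ip_self by simp
qed

context UU begin

lemma upper:
  assumes T: "T \<subseteq> {..<2*N}"
  shows "onc N k Y \<Longrightarrow> k \<le> card T \<Longrightarrow> Ft N U T Y k \<le> (\<Sum>j=1..k. 1 + s_val N U (card T - j))"
proof (induction k arbitrary: Y)
  case 0
  then show ?case by (simp add: Ft_def)
next
  case (Suc k)
  have fT: "finite T" using T finite_subset by blast
  obtain T0 where T0: "T0 \<subseteq> T" "card T0 = k"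
    using obtain_subset_with_card_n[of k T] Suc.prems(2) by auto
  have fT0: "finite T0" using T0(1) fT finite_subset by blast
  obtain z where z: "\<exists>l<Suc k. z l \<noteq> 0"
    "\<forall>r<k. (\<Sum>l<Suc k. sv N U (\<lambda>i. Y i l) (pick T0 r) * z l) = 0"
    using kernel_fun[of k "Suc k" "\<lambda>r l. sv N U (\<lambda>i. Y i l) (pick T0 r)"] by auto
  define sz where "sz = sqrt (\<Sum>l<Suc k. (cmod (z l))^2)"
  define z' where "z' l = z l / complex_of_real sz" for l
  have zn: "(\<Sum>l<Suc k. (cmod (z' l))^2) = 1" unfolding z'_def sz_def by (rule normalize_vec(2)[OF z(1)])
  obtain H where H: "unc (Suc k) H" "\<forall>r<Suc k. H r 0 = z' r"
    using completion[OF _ zn] by auto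
  define Y' where "Y' = rot (Suc k) Y H"
  have oY': "onc N (Suc k) Y'" unfolding Y'_def
    by (rule onc_rot[OF Suc.prems(1)]) (use H(1) in \<open>simp add: unc_def\<close>)
  have FY: "Ft N U T Y (Suc k) = Ft N U T Y' (Suc k)" unfolding Y'_def
    by (rule Ft_rot[symmetric]) (use H(1) in \<open>simp add: unc_def\<close>)
  define \<phi> where "\<phi> i = Y' i 0" for i
  have \<phi>e: "\<phi> = (\<lambda>i. \<Sum>r<Suc k. Y i r * z' r)"
    unfolding \<phi>_def Y'_def rot_def using H(2) by auto
  have n\<phi>: "nrm N \<phi> = 1" unfolding \<phi>_def by (rule onc_col0_nrm[OF oY'])
  have zero: "sv N U \<phi> t = 0" if t: "t \<in> T0" for t
  proof -
    obtain r where r: "r < k" "t = pick T0 r"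
      using pick_bij[OF fT0] t T0(2) unfolding bij_betw_def by auto
    have "sv N U \<phi> t = (\<Sum>l<Suc k. sv N U (\<lambda>i. Y i l) t * z' l)" unfolding \<phi>e sv_lin ..
    also have "\<dots> = (\<Sum>l<Suc k. sv N U (\<lambda>i. Y i l) t * z l) / complex_of_real sz"
      by (simp only: z'_def times_divide_eq_right sum_divide_distrib)
    also have "\<dots> = 0" using z(2) r by simp
    finally show ?thesis .
  qed
  have "(\<Sum>t\<in>T. (cmod (sv N U \<phi> t))^2) = (\<Sum>t\<in>T - T0. (cmod (sv N U \<phi> t))^2)"
  proof -
    have "(\<Sum>t\<in>T. (cmod (sv N U \<phi> t))^2) = (\<Sum>t\<in>T - T0. (cmod (sv N U \<phi> t))^2) + (\<Sum>t\<in>T0. (cmod (sv N U \<phi> t))^2)"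
      by (rule sum.subset_diff[OF T0(1) fT])
    moreover have "(\<Sum>t\<in>T0. (cmod (sv N U \<phi> t))^2) = 0" using zero by simp
    ultimately show ?thesis by simp
  qed
  also have "\<dots> \<le> 1 + s_val N U (card T - Suc k)"
  proof (rule single_upper_T[OF _ n\<phi>])
    show "T - T0 \<subseteq> {..<2*N}" using T by auto
    show "card (T - T0) = card T - Suc k + 1"
      using card_Diff_subset[OF fT0 T0(1)] T0(2) Suc.prems(2) by simp
  qed
  finally have t1: "(\<Sum>t\<in>T. (cmod (sv N U (\<lambda>i. Y' i 0) t))^2) \<le> 1 + s_val N U (card T - Suc k)"
    unfolding \<phi>_def by simp
  have t2: "Ft N U T (dropc Y') k \<le> (\<Sum>j=1..k. 1 + s_val N U (card T - j))"
    by (rule Suc.IH[OF onc_dropc[OF oY']]) (use Suc.prems(2) in simp)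
  have "Ft N U T Y (Suc k) = (\<Sum>t\<in>T. (cmod (sv N U (\<lambda>i. Y' i 0) t))^2) + Ft N U T (dropc Y') k"
    unfolding FY by (rule Ft_Suc)
  also have "\<dots> \<le> (\<Sum>j=1..k. 1 + s_val N U (card T - j)) + (1 + s_val N U (card T - Suc k))"
    using t1 t2 by simp
  also have "\<dots> = (\<Sum>j=1..Suc k. 1 + s_val N U (card T - j))" by simp
  finally show ?case .
qed

end


lemma mv_scale: "mv N U (\<lambda>j. y j / c) i = mv N U y i / c"
  unfolding mv_def by (simp add: sum_divide_distrib)

lemma nrm_zero: "nrm N x = 0 \<Longrightarrow> i < N \<Longrightarrow> x i = 0"
proof -
  assume "nrm N x = 0" "i < N"
  then have "\<forall>i\<in>{..<N}. (cmod (x i))^2 = 0" unfolding nrm_def by (subst sum_nonneg_eq_0_iff[symmetric]) auto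
  then show ?thesis using \<open>i < N\<close> by simp
qed

context UU begin

lemma E_sum:
  assumes T1: "T1 \<subseteq> {..<2*N}" and i: "i < N"
  shows "(\<Sum>t\<in>T1. (if t < N then (if i = t then 1 else 0) else U$$(i, t - N)) * \<beta> t)
     = (if i \<in> T1 then \<beta> i else 0) + mv N U (\<lambda>j. if N + j \<in> T1 then \<beta> (N + j) else 0) i"
proof -
  have fT: "finite T1" using T1 finite_subset by blast
  have sp: "T1 = {t\<in>T1. t < N} \<union> {t\<in>T1. N \<le> t}" by auto
  have "(\<Sum>t\<in>T1. (if t < N then (if i = t then 1 else 0) else U$$(i, t - N)) * \<beta> t)
     = (\<Sum>t\<in>{t\<in>T1. t < N}. (if t < N then (if i = t then 1 else 0) else U$$(i, t - N)) * \<beta> t)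
     + (\<Sum>t\<in>{t\<in>T1. N \<le> t}. (if t < N then (if i = t then 1 else 0) else U$$(i, t - N)) * \<beta> t)"
    by (subst sp, rule sum.union_disjoint) (use fT in auto)
  also have "(\<Sum>t\<in>{t\<in>T1. t < N}. (if t < N then (if i = t then 1 else 0) else U$$(i, t - N)) * \<beta> t)
     = (\<Sum>t\<in>{t\<in>T1. t < N}. if i = t then \<beta> t else 0)"
    by (intro sum.cong refl) auto
  also have "\<dots> = (if i \<in> T1 then \<beta> i else 0)" using fT i by (simp add: sum.delta)
  also have "(\<Sum>t\<in>{t\<in>T1. N \<le> t}. (if t < N then (if i = t then 1 else 0) else U$$(i, t - N)) * \<beta> t)
     = (\<Sum>t\<in>{t\<in>T1. N \<le> t}. U$$(i, t - N) * \<beta> (N + (t - N)))"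
    by (intro sum.cong refl) auto
  also have "\<dots> = (\<Sum>j\<in>(\<lambda>t. t - N) ` {t\<in>T1. N \<le> t}. U$$(i, j) * \<beta> (N + j))"
    by (rule sum.reindex[symmetric, unfolded o_def]) (auto simp: inj_on_def)
  also have "\<dots> = (\<Sum>j<N. U$$(i, j) * (if N + j \<in> T1 then \<beta> (N + j) else 0))"
  proof (rule sum.mono_neutral_cong_left)
    show "(\<lambda>t. t - N) ` {t\<in>T1. N \<le> t} \<subseteq> {..<N}" using T1 by auto
    show "\<forall>j\<in>{..<N} - (\<lambda>t. t - N) ` {t\<in>T1. N \<le> t}. U$$(i, j) * (if N + j \<in> T1 then \<beta> (N + j) else 0) = 0"
    proof
      fix j assume j: "j \<in> {..<N} - (\<lambda>t. t - N) ` {t\<in>T1. N \<le> t}"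
      have "N + j \<notin> T1"
      proof
        assume "N + j \<in> T1"
        then have "j \<in> (\<lambda>t. t - N) ` {t\<in>T1. N \<le> t}" by (intro image_eqI[of _ _ "N + j"]) auto
        then show False using j by blast
      qed
      then show "U$$(i, j) * (if N + j \<in> T1 then \<beta> (N + j) else 0) = 0" by simp
    qed
    show "\<And>j. j \<in> (\<lambda>t. t - N) ` {t\<in>T1. N \<le> t} \<Longrightarrow> U$$(i, j) * \<beta> (N + j) = U$$(i, j) * (if N + j \<in> T1 then \<beta> (N + j) else 0)"
      by auto
  qed simp
  finally show ?thesis unfolding mv_def by simp
qed


lemma lower:
  assumes T: "T \<subseteq> {..<2*N}"
  shows "onc N d Y \<Longrightarrow> k + d = N \<Longrightarrow> k \<le> card T \<Longrightarrow> (\<Sum>t\<in>{k..<card T}. 1 - s_val N U t) \<le> Ft N U T Y d"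
proof (induction d arbitrary: Y k)
  case 0
  have cT: "card T \<le> 2 * N" using card_mono[OF _ T] by simp
  have "(\<Sum>t\<in>{k..<card T}. 1 - s_val N U t) = 0"
  proof (rule sum.neutral, rule ballI)
    fix t assume "t \<in> {k..<card T}"
    then have "N \<le> t" "t < 2 * N" using 0 cT by auto
    then show "1 - s_val N U t = 0" using s_eq1 by simp
  qed
  then show ?case by (simp add: Ft_def)
next
  case (Suc d)
  have fT: "finite T" using T finite_subset by blast
  have kN: "k < N" using Suc.prems(2) by simp
  show ?case
  proof (cases "k = card T")
    case True
    then show ?thesis using Ft_nonneg by simp
  next
    case False
    then have kT: "k < card T" using Suc.prems(3) by simp
    have split_sum: "(\<Sum>t\<in>{k..<card T}. 1 - s_val N U t) = (1 - s_val N U k) + (\<Sum>t\<in>{Suc k..<card T}. 1 - s_val N U t)"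
      using kT by (simp add: sum.atLeast_Suc_lessThan)
    obtain T1 where T1: "T1 \<subseteq> T" "card T1 = Suc k"
      using obtain_subset_with_card_n[of "Suc k" T] kT by auto
    have fT1: "finite T1" using T1(1) fT finite_subset by blast
    have T1s: "T1 \<subseteq> {..<2*N}" using T1(1) T by auto
    define S :: "(nat + nat) set" where "S = Inl ` {..<Suc d} \<union> Inr ` T1"
    have fS: "finite S" unfolding S_def using fT1 by simp
    have cS: "card S = Suc d + Suc k" unfolding S_def
      by (subst card_Un_disjoint) (auto simp: card_image fT1 T1(2))
    define E where "E i t = (if t < N then (if i = t then 1 else 0) else U$$(i, t - N))" for i t
    define M where "M i l = (case l of Inl a \<Rightarrow> Y i a | Inr t \<Rightarrow> - E i t)" for i l
    obtain z where z: "\<exists>l\<in>S. z l \<noteq> 0" "\<forall>i<N. (\<Sum>l\<in>S. M i l * z l) = 0"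
      using kernel_set[OF fS, of N M] cS Suc.prems(2) by auto
    define \<alpha> where "\<alpha> a = z (Inl a)" for a
    define \<beta> where "\<beta> t = z (Inr t)" for t
    have eq: "(\<Sum>a<Suc d. Y i a * \<alpha> a) = (\<Sum>t\<in>T1. E i t * \<beta> t)" if i: "i < N" for i
    proof -
      have "(\<Sum>l\<in>S. M i l * z l) = (\<Sum>l\<in>Inl ` {..<Suc d}. M i l * z l) + (\<Sum>l\<in>Inr ` T1. M i l * z l)"
        unfolding S_def by (rule sum.union_disjoint) (use fT1 in auto)
      also have "(\<Sum>l\<in>Inl ` {..<Suc d}. M i l * z l) = (\<Sum>a<Suc d. Y i a * \<alpha> a)"
        by (subst sum.reindex) (auto simp: M_def \<alpha>_def)
      also have "(\<Sum>l\<in>Inr ` T1. M i l * z l) = - (\<Sum>t\<in>T1. E i t * \<beta> t)"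
        by (subst sum.reindex) (auto simp: M_def \<beta>_def sum_negf)
      finally show ?thesis using z(2) i by simp
    qed
    define x where "x i = (if i \<in> T1 \<and> i < N then \<beta> i else 0)" for i
    define y where "y j = (if N + j \<in> T1 then \<beta> (N + j) else 0)" for j
    let ?I = "{t\<in>T1. t < N}" and ?J = "(\<lambda>t. t - N) ` {t\<in>T1. N \<le> t}"
    have IJ: "?I \<subseteq> {..<N}" "?J \<subseteq> {..<N}" using IJ_sub[OF T1s] by auto
    have cIJ: "card ?I + card ?J = Suc k" using card_IJ[OF fT1] T1(2) by simp
    have xy: "(\<Sum>a<Suc d. Y i a * \<alpha> a) = x i + mv N U y i" if i: "i < N" for i
      unfolding eq[OF i] E_def using E_sum[OF T1s i, of \<beta>] i unfolding x_def y_def by simp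
    have xs: "\<forall>i. i \<notin> ?I \<longrightarrow> x (i::nat) = 0"
    proof (intro allI impI)
      fix i assume "i \<notin> ?I"
      then show "x i = 0" unfolding x_def using T1s by auto
    qed
    have ys: "\<forall>j. j \<notin> ?J \<longrightarrow> y (j::nat) = 0"
    proof (intro allI impI)
      fix j assume j: "j \<notin> ?J"
      have "N + j \<notin> T1"
      proof
        assume "N + j \<in> T1"
        then have "j \<in> ?J" by (intro image_eqI[of _ _ "N + j"]) auto
        then show False using j by blast
      qed
      then show "y j = 0" unfolding y_def by simp
    qed
    have opb1: "opb N U ?I ?J (op_norm (submatrix U ?I ?J))" by (rule opb_sub[OF IJ])
    have cs: "op_norm (submatrix U ?I ?J) \<le> s_val N U k" by (rule s_ge[OF IJ]) (use cIJ in simp)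
    have c0: "0 \<le> op_norm (submatrix U ?I ?J)" by (rule opn_nonneg[OF IJ])
    show ?thesis
    proof (cases "\<exists>a<Suc d. \<alpha> a \<noteq> 0")
      case True
      define sa where "sa = sqrt (\<Sum>l<Suc d. (cmod (\<alpha> l))^2)"
      have sa0: "0 < sa" unfolding sa_def using normalize_vec(1)[OF True] by simp
      define \<alpha>' where "\<alpha>' l = \<alpha> l / complex_of_real sa" for l
      have an: "(\<Sum>l<Suc d. (cmod (\<alpha>' l))^2) = 1" unfolding \<alpha>'_def sa_def by (rule normalize_vec(2)[OF True])
      obtain H where H: "unc (Suc d) H" "\<forall>r<Suc d. H r 0 = \<alpha>' r"
        using completion[OF _ an] by auto
      define Y' where "Y' = rot (Suc d) Y H"
      have oY': "onc N (Suc d) Y'" unfolding Y'_def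
        by (rule onc_rot[OF Suc.prems(1)]) (use H(1) in \<open>simp add: unc_def\<close>)
      have FY: "Ft N U T Y (Suc d) = Ft N U T Y' (Suc d)" unfolding Y'_def
        by (rule Ft_rot[symmetric]) (use H(1) in \<open>simp add: unc_def\<close>)
      define \<phi> where "\<phi> i = Y' i 0" for i
      have n\<phi>: "nrm N \<phi> = 1" unfolding \<phi>_def by (rule onc_col0_nrm[OF oY'])
      have \<phi>e: "\<phi> i = x i / complex_of_real sa + mv N U (\<lambda>j. y j / complex_of_real sa) i" if i: "i < N" for i
      proof -
        have "\<phi> i = (\<Sum>r<Suc d. Y i r * \<alpha>' r)" unfolding \<phi>_def Y'_def rot_def using H(2) by simp
        also have "\<dots> = (\<Sum>r<Suc d. Y i r * \<alpha> r) / complex_of_real sa"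
          by (simp only: \<alpha>'_def times_divide_eq_right sum_divide_distrib)
        also have "\<dots> = (x i + mv N U y i) / complex_of_real sa" unfolding xy[OF i] ..
        finally show ?thesis unfolding mv_scale by (simp add: add_divide_distrib)
      qed
      have "1 - op_norm (submatrix U ?I ?J) \<le> (\<Sum>i\<in>?I. (cmod (\<phi> i))^2) + (\<Sum>j\<in>?J. (cmod (ad N U \<phi> j))^2)"
      proof (rule single_lower[OF Uu IJ opb1 c0 _ _ _ n\<phi>])
        show "\<forall>i. i \<notin> ?I \<longrightarrow> x i / complex_of_real sa = 0" using xs by simp
        show "\<forall>j. j \<notin> ?J \<longrightarrow> y j / complex_of_real sa = 0" using ys by simp
        show "\<forall>i<N. \<phi> i = x i / complex_of_real sa + mv N U (\<lambda>j. y j / complex_of_real sa) i" using \<phi>e by blast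
      qed
      also have "\<dots> = (\<Sum>t\<in>T1. (cmod (sv N U \<phi> t))^2)" by (rule sum_sv_split[symmetric, OF fT1])
      also have "\<dots> \<le> (\<Sum>t\<in>T. (cmod (sv N U \<phi> t))^2)" by (rule sum_mono2[OF fT T1(1)]) auto
      finally have t1: "1 - s_val N U k \<le> (\<Sum>t\<in>T. (cmod (sv N U (\<lambda>i. Y' i 0) t))^2)"
        using cs unfolding \<phi>_def by simp
      have t2: "(\<Sum>t\<in>{Suc k..<card T}. 1 - s_val N U t) \<le> Ft N U T (dropc Y') d"
        by (rule Suc.IH[OF onc_dropc[OF oY']]) (use Suc.prems(2) kT in auto)
      have "Ft N U T Y (Suc d) = (\<Sum>t\<in>T. (cmod (sv N U (\<lambda>i. Y' i 0) t))^2) + Ft N U T (dropc Y') d"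
        unfolding FY by (rule Ft_Suc)
      then show ?thesis using t1 t2 split_sum by simp
    next
      case False
      then have a0: "\<And>a. a < Suc d \<Longrightarrow> \<alpha> a = 0" by auto
      have xmy: "mv N U y i = - x i" if i: "i < N" for i
        using xy[OF i] a0 by (simp add: eq_neg_iff_add_eq_0 add.commute)
      obtain l where l: "l \<in> S" "z l \<noteq> 0" using z(1) by blast
      then obtain t where t: "t \<in> T1" "\<beta> t \<noteq> 0" using a0 unfolding S_def \<alpha>_def \<beta>_def by auto
      define X where "X = nrm N x"
      have XY: "nrm N y = X"
      proof -
        have "nrm N y = nrm N (mv N U y)" by (rule nrm_mv[OF Uu, symmetric])
        also have "\<dots> = nrm N x" unfolding nrm_def using xmy by simp
        finally show ?thesis unfolding X_def .
      qed
      have X0: "0 < X"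
      proof (rule ccontr)
        assume "\<not> 0 < X"
        then have X: "X = 0" using nrm_nonneg[of N x] unfolding X_def by simp
        show False
        proof (cases "t < N")
          case True
          then have "x t = 0" using nrm_zero X unfolding X_def by blast
          then show False using t True unfolding x_def by simp
        next
          case False
          then have tN: "t - N < N" using t T1s by auto
          have "y (t - N) = 0" using nrm_zero[of N y] XY X tN by simp
          then show False using t False unfolding y_def by simp
        qed
      qed
      have ipx: "ip N x (mv N U y) = - complex_of_real X"
      proof -
        have "ip N x (mv N U y) = - ip N x x" unfolding ip_def using xmy by (simp add: sum_negf)
        then show ?thesis unfolding ip_self X_def by simp
      qed
      have "cmod (ip N x (mv N U y)) \<le> op_norm (submatrix U ?I ?J) * sqrt (nrm N x) * sqrt (nrm N y)"
        using opb1 xs ys unfolding opb_def by blast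
      then have "X \<le> op_norm (submatrix U ?I ?J) * sqrt X * sqrt X"
        unfolding ipx XY norm_minus_cancel norm_of_real using X0 unfolding X_def by simp
      then have "X \<le> op_norm (submatrix U ?I ?J) * X" using X0 by (simp add: mult.assoc)
      then have "1 \<le> op_norm (submatrix U ?I ?J)" using X0 by simp
      then have sk: "1 - s_val N U k \<le> 0" using cs by simp
      have t2: "(\<Sum>t\<in>{Suc k..<card T}. 1 - s_val N U t) \<le> Ft N U T (dropc Y) d"
        by (rule Suc.IH[OF onc_dropc[OF Suc.prems(1)]]) (use Suc.prems(2) kT in auto)
      have t1: "0 \<le> (\<Sum>t\<in>T. (cmod (sv N U (\<lambda>i. Y i 0) t))^2)" by (intro sum_nonneg) auto
      have "Ft N U T Y (Suc d) = (\<Sum>t\<in>T. (cmod (sv N U (\<lambda>i. Y i 0) t))^2) + Ft N U T (dropc Y) d"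
        by (rule Ft_Suc)
      then show ?thesis using t1 t2 sk split_sum by simp
    qed
  qed
qed

end


lemma sum_list_take_nth: "m \<le> length zs \<Longrightarrow> sum_list (take m zs) = (\<Sum>i<m. zs ! (i::nat))"
  by (simp add: sum_list_sum_nth atLeast0LessThan min_def)

lemma sorted_desc_top:
  fixes zs :: "real list"
  assumes srt: "sorted_wrt (\<ge>) zs" and R: "R \<subseteq> {..<length zs}" and cR: "card R = m"
  shows "(\<Sum>i\<in>R. zs ! i) \<le> (\<Sum>i<m. zs ! i)"
proof (cases "m = 0")
  case True
  then have "R = {}" using cR R finite_subset[OF R] by auto
  then show ?thesis using True by simp
next
  case False
  have fR: "finite R" using R finite_subset by blast
  have mle: "m \<le> length zs" using card_mono[OF _ R] cR by simp
  define v where "v = zs ! (m - 1)"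
  have hi: "zs ! i \<le> v" if "i \<in> R - {..<m}" for i
  proof -
    have "m - 1 < i" "i < length zs" using that R False by auto
    then show ?thesis unfolding v_def using sorted_wrt_nth_less[OF srt] by auto
  qed
  have lo: "v \<le> zs ! i" if "i \<in> {..<m} - R" for i
  proof (cases "i = m - 1")
    case True then show ?thesis unfolding v_def by simp
  next
    case False
    then have "i < m - 1" "m - 1 < length zs" using that mle False by auto
    then show ?thesis unfolding v_def using sorted_wrt_nth_less[OF srt] by auto
  qed
  have c1: "card (R - {..<m}) = card ({..<m} - R)"
  proof -
    have "card (R - {..<m}) = card R - card (R \<inter> {..<m})" by (rule card_Diff_subset_Int) simp
    moreover have "card ({..<m} - R) = card {..<m} - card ({..<m} \<inter> R)" by (rule card_Diff_subset_Int) (use fR in simp)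
    ultimately show ?thesis using cR by (simp add: Int_commute)
  qed
  have "(\<Sum>i\<in>R. zs ! i) = (\<Sum>i\<in>R \<inter> {..<m}. zs ! i) + (\<Sum>i\<in>R - {..<m}. zs ! i)"
    using sum.Int_Diff[OF fR] by blast
  also have "(\<Sum>i\<in>R - {..<m}. zs ! i) \<le> (\<Sum>i\<in>R - {..<m}. v)" by (rule sum_mono) (use hi in auto)
  also have "\<dots> = (\<Sum>i\<in>{..<m} - R. v)" using c1 by simp
  also have "\<dots> \<le> (\<Sum>i\<in>{..<m} - R. zs ! i)" by (rule sum_mono) (use lo in auto)
  also have "(\<Sum>i\<in>R \<inter> {..<m}. zs ! i) + (\<Sum>i\<in>{..<m} - R. zs ! i) = (\<Sum>i<m. zs ! i)"
  proof -
    have "(\<Sum>i<m. zs ! i) = (\<Sum>i\<in>{..<m} \<inter> R. zs ! i) + (\<Sum>i\<in>{..<m} - R. zs ! i)"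
      using sum.Int_Diff[of "{..<m}"] by blast
    then show ?thesis by (simp add: Int_commute)
  qed
  finally show ?thesis by simp
qed

lemma top_perm:
  fixes xs :: "real list"
  obtains p where "p permutes {..<length xs}" "\<And>i. i < length xs \<Longrightarrow> rev (sort xs) ! i = xs ! p i"
proof -
  have "mset (rev (sort xs)) = mset xs" by simp
  then obtain p where p: "p permutes {..<length xs}" "permute_list p xs = rev (sort xs)"
    by (rule mset_eq_permutation)
  have "rev (sort xs) ! i = xs ! p i" if "i < length xs" for i
    using p(2) permute_list_nth[OF p(1)] that by metis
  then show ?thesis using p(1) that by blast
qed

lemma top1:
  fixes xs :: "real list"
  assumes m: "m \<le> length xs"
  shows "\<exists>T. T \<subseteq> {..<length xs} \<and> card T = m \<and> sum_list (take m (rev (sort xs))) = (\<Sum>t\<in>T. xs ! t)"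
proof -
  obtain p where p: "p permutes {..<length xs}" "\<And>i. i < length xs \<Longrightarrow> rev (sort xs) ! i = xs ! p i"
    by (rule top_perm[of xs]) blast
  have inj: "inj_on p {..<m}" by (rule permutes_inj_on[OF p(1)])
  have "sum_list (take m (rev (sort xs))) = (\<Sum>i<m. rev (sort xs) ! i)"
    by (rule sum_list_take_nth) (use m in simp)
  also have "\<dots> = (\<Sum>i<m. xs ! p i)" using p(2) m by simp
  also have "\<dots> = (\<Sum>t\<in>p ` {..<m}. xs ! t)" by (rule sum.reindex[symmetric, unfolded o_def, OF inj])
  finally have e: "sum_list (take m (rev (sort xs))) = (\<Sum>t\<in>p ` {..<m}. xs ! t)" .
  have "p ` {..<m} \<subseteq> {..<length xs}" using permutes_image[OF p(1)] m by auto
  moreover have "card (p ` {..<m}) = m" using card_image[OF inj] by simp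
  ultimately show ?thesis using e by blast
qed

lemma top2:
  fixes ys :: "real list"
  assumes T: "T \<subseteq> {..<length ys}" and cT: "card T = m"
  shows "(\<Sum>t\<in>T. ys ! t) \<le> sum_list (take m (rev (sort ys)))"
proof -
  obtain p where p: "p permutes {..<length ys}" "\<And>i. i < length ys \<Longrightarrow> rev (sort ys) ! i = ys ! p i"
    by (rule top_perm[of ys]) blast
  let ?q = "inv_into {..<length ys} p"
  have bp: "bij_betw p {..<length ys} {..<length ys}" by (rule permutes_imp_bij[OF p(1)])
  have bq: "bij_betw ?q {..<length ys} {..<length ys}" by (rule bij_betw_inv_into[OF bp])
  have pq: "p (?q t) = t" if "t < length ys" for t
    using bij_betw_inv_into_right[OF bp] that by simp
  have injq: "inj_on ?q T" using bij_betw_imp_inj_on[OF bq] T by (rule inj_on_subset)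
  have zs_q: "ys ! t = rev (sort ys) ! ?q t" if "t \<in> T" for t
  proof -
    have t: "t < length ys" using that T by auto
    have "?q t < length ys" using bij_betwE[OF bq] t by auto
    then show ?thesis using p(2)[of "?q t"] pq[OF t] by simp
  qed
  have "(\<Sum>t\<in>T. ys ! t) = (\<Sum>t\<in>T. rev (sort ys) ! ?q t)" using zs_q by simp
  also have "\<dots> = (\<Sum>i\<in>?q ` T. rev (sort ys) ! i)" by (rule sum.reindex[symmetric, unfolded o_def, OF injq])
  also have "\<dots> \<le> (\<Sum>i<m. rev (sort ys) ! i)"
  proof (rule sorted_desc_top)
    show "sorted_wrt (\<ge>) (rev (sort ys))" by (simp add: sorted_wrt_rev)
    show "?q ` T \<subseteq> {..<length (rev (sort ys))}" using bij_betwE[OF bq] T by auto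
    show "card (?q ` T) = m" using card_image[OF injq] cT by simp
  qed
  also have "\<dots> = sum_list (take m (rev (sort ys)))"
  proof (rule sum_list_take_nth[symmetric])
    show "m \<le> length (rev (sort ys))" using card_mono[OF _ T] cT by simp
  qed
  finally show ?thesis .
qed


definition cc :: "(nat \<Rightarrow> real) \<Rightarrow> nat \<Rightarrow> nat \<Rightarrow> real" where
  "cc s m j = (if j \<le> m div 2 then 1 + s (m - j) else if j \<le> m then
      (if odd m \<and> j = m div 2 + 1 then 1 else 1 - s (j - 1)) else 0)"

lemma sum_split3: "a \<le> b + 1 \<Longrightarrow> b \<le> c \<Longrightarrow> (\<Sum>j=a..c. f j) = (\<Sum>j=a..b. f j) + (\<Sum>j=Suc b..c. (f j :: real))"
proof -
  assume "a \<le> b + 1" "b \<le> c"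
  then have "{a..c} = {a..b} \<union> {Suc b..c}" by auto
  then show ?thesis by (simp add: sum.union_disjoint)
qed

lemma odd_half: "odd m \<Longrightarrow> Suc (m div 2) \<le> (m::nat)" by presburger
lemma odd_half2: "odd m \<Longrightarrow> m - m div 2 = Suc (m div 2)" for m :: nat by presburger
lemma even_half2: "even m \<Longrightarrow> m - m div 2 = m div 2" for m :: nat by presburger

lemma S_cc: "S_val lam s m = (\<Sum>j=1..m. lam j * cc s m j)"
proof -
  define n where "n = m div 2"
  show ?thesis
  proof (cases "even m")
    case True
    then have m: "m = 2 * n" unfolding n_def by simp
    have "(\<Sum>j=1..m. lam j * cc s m j) = (\<Sum>j=1..n. lam j * cc s m j) + (\<Sum>j=Suc n..m. lam j * cc s m j)"
      by (rule sum_split3) (use m in auto)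
    also have "(\<Sum>j=1..n. lam j * cc s m j) = (\<Sum>j=1..n. lam j * (1 + s (m - j)))"
      by (intro sum.cong refl) (auto simp: cc_def n_def)
    also have "(\<Sum>j=Suc n..m. lam j * cc s m j) = (\<Sum>j=Suc n..m. lam j * (1 - s (j - 1)))"
      using True by (intro sum.cong refl) (auto simp: cc_def n_def)
    finally show ?thesis unfolding S_val_def Let_def n_def[symmetric] using True by simp
  next
    case False
    then have m: "m = 2 * n + 1" unfolding n_def by simp
    have "(\<Sum>j=1..m. lam j * cc s m j) = (\<Sum>j=1..n. lam j * cc s m j) + (\<Sum>j=Suc n..m. lam j * cc s m j)"
      by (rule sum_split3) (use m in auto)
    also have "(\<Sum>j=Suc n..m. lam j * cc s m j) = (\<Sum>j=Suc n..Suc n. lam j * cc s m j) + (\<Sum>j=Suc (Suc n)..m. lam j * cc s m j)"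
      by (rule sum_split3) (use m in auto)
    also have "(\<Sum>j=Suc n..Suc n. lam j * cc s m j) = lam (Suc n) * cc s m (Suc n)" by simp
    also have "cc s m (Suc n) = 1" using False odd_half[of m] unfolding cc_def n_def by auto
    also have "(\<Sum>j=1..n. lam j * cc s m j) = (\<Sum>j=1..n. lam j * (1 + s (m - j)))"
      by (intro sum.cong refl) (auto simp: cc_def n_def)
    also have "(\<Sum>j=Suc (Suc n)..m. lam j * cc s m j) = (\<Sum>j=n+2..m. lam j * (1 - s (j - 1)))"
      using False by (intro sum.cong refl) (auto simp: cc_def n_def)
    finally show ?thesis unfolding S_val_def Let_def n_def[symmetric] using False by simp
  qed
qed

lemma C_low: "k \<le> m div 2 \<Longrightarrow> (\<Sum>j=1..k. cc s m j) = (\<Sum>j=1..k. 1 + s (m - j))"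
  by (intro sum.cong refl) (auto simp: cc_def)

lemma sum_rev_s: assumes nm: "n \<le> (m::nat)" shows "(\<Sum>j=1..n. s (m - j)) = (\<Sum>t\<in>{m-n..<m}. (s t :: real))"
proof (rule sum.reindex_bij_witness[of _ "\<lambda>t. m - t" "\<lambda>j. m - j"])
  fix a assume a: "a \<in> {1..n}"
  show "m - (m - a) = a" using a nm by auto
  show "m - a \<in> {m - n..<m}" using a nm by auto
  show "s (m - a) = s (m - a)" ..
next
  fix b assume b: "b \<in> {m - n..<m}"
  show "m - (m - b) = b" using b nm by auto
  show "m - b \<in> {1..n}" using b nm by auto
qed

lemma sum_shift_s: "(\<Sum>j=Suc p..k. s (j - 1)) = (\<Sum>t\<in>{p..<k}. (s t :: real))"
  by (rule sum.reindex_bij_witness[of _ "\<lambda>t. Suc t" "\<lambda>j. j - 1"]) auto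

lemma C_high:
  assumes k1: "m - m div 2 \<le> k" and k2: "k \<le> m"
  shows "(\<Sum>j=1..k. cc s m j) = real k + (\<Sum>t\<in>{k..<m}. s t)"
proof -
  define n where "n = m div 2"
  define p where "p = m - n"
  have np: "n \<le> p" "p \<le> k" "p \<le> m" using k1 k2 unfolding p_def n_def by auto
  have "(\<Sum>j=1..k. cc s m j) = (\<Sum>j=1..n. cc s m j) + (\<Sum>j=Suc n..k. cc s m j)"
    by (rule sum_split3) (use np in auto)
  also have "(\<Sum>j=Suc n..k. cc s m j) = (\<Sum>j=Suc n..p. cc s m j) + (\<Sum>j=Suc p..k. cc s m j)"
    by (rule sum_split3) (use np in auto)
  also have "(\<Sum>j=1..n. cc s m j) = (\<Sum>j=1..n. 1 + s (m - j))"
    unfolding n_def by (rule C_low) simp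
  also have "\<dots> = real n + (\<Sum>t\<in>{p..<m}. s t)"
  proof -
    have "(\<Sum>j=1..n. s (m - j)) = (\<Sum>t\<in>{p..<m}. s t)"
      unfolding p_def by (rule sum_rev_s) (simp add: n_def)
    then show ?thesis unfolding sum.distrib by simp
  qed
  also have "(\<Sum>j=Suc n..p. cc s m j) = real p - real n"
  proof (cases "even m")
    case True
    then have "p = n" unfolding p_def n_def by auto
    then show ?thesis by simp
  next
    case False
    then have pn: "p = Suc n" unfolding p_def n_def by presburger
    then show ?thesis using False odd_half[of m] by (simp add: cc_def n_def)
  qed
  also have "(\<Sum>j=Suc p..k. cc s m j) = (\<Sum>j=Suc p..k. 1 - s (j - 1))"
  proof (intro sum.cong refl)
    fix j assume j: "j \<in> {Suc p..k}"
    then have "\<not> j \<le> m div 2" "j \<le> m" "\<not> (odd m \<and> j = m div 2 + 1)"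
      using np k2 odd_half2[of m] unfolding p_def n_def by auto
    then show "cc s m j = 1 - s (j - 1)" unfolding cc_def by auto
  qed
  also have "\<dots> = real k - real p - (\<Sum>t\<in>{p..<k}. s t)"
    unfolding sum_subtractf sum_shift_s using np by simp
  also have "(\<Sum>t\<in>{p..<m}. s t) = (\<Sum>t\<in>{p..<k}. s t) + (\<Sum>t\<in>{k..<m}. s t)"
    by (rule sum.atLeastLessThan_concat[symmetric]) (use np k2 in auto)
  finally show ?thesis by simp
qed

lemma C_big: assumes "m \<le> k" shows "(\<Sum>j=1..k. cc s m j) = real m"
proof -
  have "(\<Sum>j=1..k. cc s m j) = (\<Sum>j=1..m. cc s m j) + (\<Sum>j=Suc m..k. cc s m j)"
    by (rule sum_split3) (use assms in auto)
  also have "(\<Sum>j=Suc m..k. cc s m j) = 0" by (intro sum.neutral) (auto simp: cc_def)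
  also have "(\<Sum>j=1..m. cc s m j) = real m" using C_high[of m m s] by simp
  finally show ?thesis by simp
qed

lemma abel: "(\<Sum>j<n. a j * b j) = (\<Sum>k<n. (a k - a (Suc k)) * (\<Sum>j<Suc k. b j)) + a n * (\<Sum>j<n. (b j :: real))"
  by (induction n) (simp_all add: algebra_simps)

lemma abel_le:
  fixes a f g :: "nat \<Rightarrow> real"
  assumes mono: "\<forall>k<n. a (Suc k) \<le> a k" and an: "a n = 0"
    and fg: "\<forall>k<n. (\<Sum>j<Suc k. f j) \<le> (\<Sum>j<Suc k. g j)"
  shows "(\<Sum>j<n. a j * f j) \<le> (\<Sum>j<n. a j * g j)"
proof -
  have "(\<Sum>k<n. (a k - a (Suc k)) * (\<Sum>j<Suc k. f j)) \<le> (\<Sum>k<n. (a k - a (Suc k)) * (\<Sum>j<Suc k. g j))"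
    by (rule sum_mono, rule mult_left_mono) (use mono fg in auto)
  then show ?thesis unfolding abel[where n=n and a=a and b=f] abel[where n=n and a=a and b=g] an by simp
qed

lemma S_ev:
  assumes lam: "lam = (\<lambda>j. if 1 \<le> j \<and> j \<le> N then ev ! (j - 1) else (0::real))"
  shows "S_val lam s m = (\<Sum>j<N. ev ! j * cc s m (Suc j))"
proof -
  have "S_val lam s m = (\<Sum>j=1..m + N. lam j * cc s m j)"
    unfolding S_cc by (rule sum.mono_neutral_left) (auto simp: cc_def)
  also have "\<dots> = (\<Sum>j=1..N. lam j * cc s m j)"
    by (rule sum.mono_neutral_right) (auto simp: lam)
  also have "\<dots> = (\<Sum>j<N. lam (Suc j) * cc s m (Suc j))"
    by (simp add: sum.atLeast1_atMost_eq)
  also have "\<dots> = (\<Sum>j<N. ev ! j * cc s m (Suc j))" by (intro sum.cong refl) (auto simp: lam)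
  finally show ?thesis .
qed


lemma nrm_ad: assumes U: "unc N (\<lambda>i j. U$$(i,j))"
  shows "nrm N (ad N U \<phi>) = nrm N \<phi>"
proof -
  have H: "\<forall>r<N. \<forall>s<N. (\<Sum>l<N. cnj (U$$(r,l)) * cnj (cnj (U$$(s,l)))) = (if r = s then 1 else 0)"
  proof (intro allI impI)
    fix r s assume "r < N" "s < N"
    then have "(\<Sum>l<N. U$$(r,l) * cnj (U$$(s,l))) = (if r = s then 1 else 0)"
      using U unfolding unc_def ronc_def by blast
    then have "cnj (\<Sum>l<N. U$$(r,l) * cnj (U$$(s,l))) = (if r = s then 1 else 0)" by simp
    then show "(\<Sum>l<N. cnj (U$$(r,l)) * cnj (cnj (U$$(s,l)))) = (if r = s then 1 else 0)" by simp
  qed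
  have "nrm N (ad N U \<phi>) = (\<Sum>l<N. (cmod (\<Sum>r<N. \<phi> r * cnj (U$$(r,l))))^2)"
    unfolding nrm_def ad_def by (simp add: mult.commute)
  also have "\<dots> = nrm N \<phi>" unfolding nrm_def by (rule rownorm[OF H])
  finally show ?thesis .
qed

lemma Ft_shift: "Ft N U T Y (k + d) = Ft N U T Y k + Ft N U T (\<lambda>i l. Y i (k + l)) d"
  unfolding Ft_def
proof (induction d)
  case 0 then show ?case by simp
next
  case (Suc d)
  then show ?case by (simp add: sum.distrib algebra_simps)
qed

lemma onc_shift: "onc N (k + d) Y \<Longrightarrow> onc N d (\<lambda>i l. Y i (k + l))"
  unfolding onc_def by auto

lemma Ft_swap: "Ft N U T Y k = (\<Sum>j<k. \<Sum>t\<in>T. (cmod (sv N U (\<lambda>i. Y i j) t))^2)"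
  unfolding Ft_def by (rule sum.swap)

context UU begin

lemma Ft_full:
  assumes T: "T \<subseteq> {..<2*N}" and V: "unc N Y"
  shows "Ft N U T Y N = real (card T)"
proof -
  have row: "(\<Sum>l<N. (cmod (sv N U (\<lambda>i. Y i l) t))^2) = 1" if t: "t < 2 * N" for t
  proof (cases "t < N")
    case True
    have "complex_of_real (\<Sum>l<N. (cmod (Y t l))^2) = (\<Sum>l<N. Y t l * cnj (Y t l))"
      by (simp only: of_real_sum cmod_sq_complex)
    also have "\<dots> = 1" using V True unfolding unc_def ronc_def by auto
    finally show ?thesis using True unfolding sv_def by (simp only: of_real_eq_1_iff) simp
  next
    case False
    define j where "j = t - N"
    have j: "j < N" using t False unfolding j_def by auto
    have H: "\<forall>r<N. \<forall>s<N. (\<Sum>l<N. Y r l * cnj (Y s l)) = (if r = s then 1 else 0)"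
      using V unfolding unc_def ronc_def by blast
    have "(\<Sum>l<N. (cmod (sv N U (\<lambda>i. Y i l) t))^2) = (\<Sum>l<N. (cmod (\<Sum>r<N. cnj (U$$(r,j)) * Y r l))^2)"
      using False unfolding sv_def ad_def j_def by simp
    also have "\<dots> = (\<Sum>r<N. (cmod (cnj (U$$(r,j))))^2)" by (rule rownorm[OF H])
    also have "\<dots> = 1"
    proof -
      have "complex_of_real (\<Sum>r<N. (cmod (cnj (U$$(r,j))))^2) = (\<Sum>r<N. complex_of_real ((cmod (U$$(r,j)))^2))"
        by (simp only: of_real_sum complex_mod_cnj)
      also have "\<dots> = (\<Sum>r<N. cnj (U$$(r,j)) * U$$(r,j))" by (simp only: cnj_mult_self)
      also have "\<dots> = 1" using Uu j unfolding unc_def onc_def by auto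
      finally show ?thesis by (simp only: of_real_eq_1_iff)
    qed
    finally show ?thesis .
  qed
  have "Ft N U T Y N = (\<Sum>t\<in>T. 1)" unfolding Ft_def using row T by (intro sum.cong refl) auto
  then show ?thesis by simp
qed


lemma onc_le: "onc N n Y \<Longrightarrow> k \<le> n \<Longrightarrow> onc N k Y" unfolding onc_def by auto

lemma key_bound:
  assumes T: "T \<subseteq> {..<2*N}" and V: "unc N Y"
    and srt: "sorted_wrt (\<ge>) ev" and len: "length ev = N" and ev0: "\<forall>j<N. 0 \<le> ev!j"
  shows "(\<Sum>j<N. ev!j * (\<Sum>t\<in>T. (cmod (sv N U (\<lambda>i. Y i j) t))^2))
       \<le> (\<Sum>j<N. ev!j * cc (s_val N U) (card T) (Suc j))"
proof -
  define m where "m = card T"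
  define s where "s = s_val N U"
  define f where "f j = (\<Sum>t\<in>T. (cmod (sv N U (\<lambda>i. Y i j) t))^2)" for j
  define g where "g j = cc s m (Suc j)" for j
  define a where "a j = (if j < N then ev!j else 0)" for j
  have oN: "onc N N Y" using V unfolding unc_def by simp
  have FN: "Ft N U T Y N = real m" unfolding m_def by (rule Ft_full[OF T V])
  have fg: "\<forall>k<N. (\<Sum>j<Suc k. f j) \<le> (\<Sum>j<Suc k. g j)"
  proof (intro allI impI)
    fix k assume k: "k < N"
    define K where "K = Suc k"
    have KN: "K \<le> N" using k unfolding K_def by simp
    have lf: "(\<Sum>j<K. f j) = Ft N U T Y K" unfolding f_def Ft_swap ..
    have lg: "(\<Sum>j<K. g j) = (\<Sum>j=1..K. cc s m j)" unfolding g_def K_def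
      by (simp add: sum.atLeast1_atMost_eq)
    have split: "Ft N U T Y N = Ft N U T Y K + Ft N U T (\<lambda>i l. Y i (K + l)) (N - K)"
      using Ft_shift[of N U T Y K "N - K"] KN by simp
    have oK: "onc N K Y" by (rule onc_le[OF oN KN])
    have oR: "onc N (N - K) (\<lambda>i l. Y i (K + l))" by (rule onc_shift) (use oN KN in simp)
    have FR0: "0 \<le> Ft N U T (\<lambda>i l. Y i (K + l)) (N - K)" by (rule Ft_nonneg)
    have "Ft N U T Y K \<le> (\<Sum>j=1..K. cc s m j)"
    proof (cases "K \<le> m div 2")
      case True
      have "Ft N U T Y K \<le> (\<Sum>j=1..K. 1 + s_val N U (card T - j))"
        by (rule upper[OF T oK]) (use True in \<open>simp add: m_def\<close>)
      also have "\<dots> = (\<Sum>j=1..K. cc s m j)" using C_low[OF True, of s] unfolding s_def m_def by simp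
      finally show ?thesis .
    next
      case False
      show ?thesis
      proof (cases "K \<le> m")
        case True
        have Km: "m - m div 2 \<le> K" using False by simp
        have "(\<Sum>t\<in>{K..<card T}. 1 - s_val N U t) \<le> Ft N U T (\<lambda>i l. Y i (K + l)) (N - K)"
          by (rule lower[OF T oR]) (use KN True in \<open>simp_all add: m_def\<close>)
        moreover have "(\<Sum>t\<in>{K..<m}. 1 - s t) = real m - real K - (\<Sum>t\<in>{K..<m}. s t)"
          using True by (simp add: sum_subtractf of_nat_diff)
        ultimately have "Ft N U T Y K \<le> real K + (\<Sum>t\<in>{K..<m}. s t)"
          using split FN unfolding m_def s_def by simp
        also have "\<dots> = (\<Sum>j=1..K. cc s m j)" by (rule C_high[OF Km True, symmetric])
        finally show ?thesis .
      next
        case False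
        then have "m \<le> K" by simp
        then have "(\<Sum>j=1..K. cc s m j) = real m" by (rule C_big)
        then show ?thesis using split FN FR0 by simp
      qed
    qed
    then show "(\<Sum>j<Suc k. f j) \<le> (\<Sum>j<Suc k. g j)" using lf lg unfolding K_def by simp
  qed
  have mono: "\<forall>k<N. a (Suc k) \<le> a k"
  proof (intro allI impI)
    fix k assume k: "k < N"
    show "a (Suc k) \<le> a k"
    proof (cases "Suc k < N")
      case True
      then show ?thesis unfolding a_def using sorted_wrt_nth_less[OF srt, of k "Suc k"] len k by simp
    next
      case False
      then show ?thesis unfolding a_def using ev0 k by simp
    qed
  qed
  have "(\<Sum>j<N. a j * f j) \<le> (\<Sum>j<N. a j * g j)"
    by (rule abel_le[OF mono _ fg]) (simp add: a_def)
  moreover have "(\<Sum>j<N. a j * f j) = (\<Sum>j<N. ev!j * f j)" by (intro sum.cong refl) (simp add: a_def)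
  moreover have "(\<Sum>j<N. a j * g j) = (\<Sum>j<N. ev!j * g j)" by (intro sum.cong refl) (simp add: a_def)
  ultimately show ?thesis unfolding f_def g_def s_def m_def by simp
qed

end


lemma diag_conj:
  assumes Uc: "U \<in> carrier_mat N N" and rc: "\<rho> \<in> carrier_mat N N"
    and rep: "\<forall>i<N. \<forall>k<N. \<rho> $$ (i,k) = (\<Sum>j<N. V$$(i,j) * complex_of_real (ev!j) * cnj (V$$(k,j)))"
    and i: "i < N"
  shows "(mat_adjoint U * \<rho> * U) $$ (i,i) = (\<Sum>j<N. complex_of_real (ev!j * (cmod (ad N U (\<lambda>a. V$$(a,j)) i))^2))"
proof -
  have AR: "mat_adjoint U * \<rho> \<in> carrier_mat N N" by (rule mult_carrier_mat[OF adj_carrier[OF Uc] rc])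
  have "(mat_adjoint U * \<rho> * U) $$ (i,i) = (\<Sum>b<N. (mat_adjoint U * \<rho>) $$ (i,b) * U $$ (b,i))"
    using AR Uc i by (subst mult_idx) auto
  also have "\<dots> = (\<Sum>b<N. (\<Sum>a<N. cnj (U$$(a,i)) * \<rho> $$ (a,b)) * U $$ (b,i))"
  proof (intro sum.cong refl)
    fix b assume b: "b \<in> {..<N}"
    have "(mat_adjoint U * \<rho>) $$ (i,b) = (\<Sum>a<N. mat_adjoint U $$ (i,a) * \<rho> $$ (a,b))"
      using Uc rc i b by (subst mult_idx) auto
    also have "\<dots> = (\<Sum>a<N. cnj (U$$(a,i)) * \<rho> $$ (a,b))" using Uc i by (intro sum.cong refl) auto
    finally show "(mat_adjoint U * \<rho>) $$ (i,b) * U $$ (b,i) = (\<Sum>a<N. cnj (U$$(a,i)) * \<rho> $$ (a,b)) * U $$ (b,i)" by simp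
  qed
  also have "\<dots> = (\<Sum>b<N. \<Sum>a<N. \<Sum>j<N. (cnj (U$$(a,i)) * V$$(a,j)) * complex_of_real (ev!j) * (cnj (V$$(b,j)) * U$$(b,i)))"
  proof (intro sum.cong refl)
    fix b assume b: "b \<in> {..<N}"
    have "(\<Sum>a<N. cnj (U$$(a,i)) * \<rho> $$ (a,b)) * U $$ (b,i) = (\<Sum>a<N. cnj (U$$(a,i)) * \<rho> $$ (a,b) * U $$ (b,i))"
      by (simp add: sum_distrib_right)
    also have "\<dots> = (\<Sum>a<N. \<Sum>j<N. (cnj (U$$(a,i)) * V$$(a,j)) * complex_of_real (ev!j) * (cnj (V$$(b,j)) * U$$(b,i)))"
    proof (intro sum.cong refl)
      fix a assume a: "a \<in> {..<N}"
      have "cnj (U$$(a,i)) * \<rho> $$ (a,b) * U $$ (b,i) = cnj (U$$(a,i)) * (\<Sum>j<N. V$$(a,j) * complex_of_real (ev!j) * cnj (V$$(b,j))) * U $$ (b,i)"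
        using rep a b by simp
      also have "\<dots> = (\<Sum>j<N. (cnj (U$$(a,i)) * V$$(a,j)) * complex_of_real (ev!j) * (cnj (V$$(b,j)) * U$$(b,i)))"
        by (simp add: sum_distrib_left sum_distrib_right ac_simps)
      finally show "cnj (U$$(a,i)) * \<rho> $$ (a,b) * U $$ (b,i) = (\<Sum>j<N. (cnj (U$$(a,i)) * V$$(a,j)) * complex_of_real (ev!j) * (cnj (V$$(b,j)) * U$$(b,i)))" .
    qed
    finally show "(\<Sum>a<N. cnj (U$$(a,i)) * \<rho> $$ (a,b)) * U $$ (b,i) = (\<Sum>a<N. \<Sum>j<N. (cnj (U$$(a,i)) * V$$(a,j)) * complex_of_real (ev!j) * (cnj (V$$(b,j)) * U$$(b,i)))" .
  qed
  also have "\<dots> = (\<Sum>j<N. \<Sum>a<N. \<Sum>b<N. (cnj (U$$(a,i)) * V$$(a,j)) * complex_of_real (ev!j) * (cnj (V$$(b,j)) * U$$(b,i)))"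
  proof -
    have "(\<Sum>b<N. \<Sum>a<N. \<Sum>j<N. (cnj (U$$(a,i)) * V$$(a,j)) * complex_of_real (ev!j) * (cnj (V$$(b,j)) * U$$(b,i)))
        = (\<Sum>b<N. \<Sum>j<N. \<Sum>a<N. (cnj (U$$(a,i)) * V$$(a,j)) * complex_of_real (ev!j) * (cnj (V$$(b,j)) * U$$(b,i)))"
      by (rule sum.cong[OF refl], rule sum.swap)
    also have "\<dots> = (\<Sum>j<N. \<Sum>b<N. \<Sum>a<N. (cnj (U$$(a,i)) * V$$(a,j)) * complex_of_real (ev!j) * (cnj (V$$(b,j)) * U$$(b,i)))"
      by (rule sum.swap)
    also have "\<dots> = (\<Sum>j<N. \<Sum>a<N. \<Sum>b<N. (cnj (U$$(a,i)) * V$$(a,j)) * complex_of_real (ev!j) * (cnj (V$$(b,j)) * U$$(b,i)))"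
      by (rule sum.cong[OF refl], rule sum.swap)
    finally show ?thesis .
  qed
  also have "\<dots> = (\<Sum>j<N. complex_of_real (ev!j * (cmod (ad N U (\<lambda>a. V$$(a,j)) i))^2))"
  proof (intro sum.cong refl)
    fix j assume j: "j \<in> {..<N}"
    define w where "w = ad N U (\<lambda>a. V$$(a,j)) i"
    have w: "w = (\<Sum>a<N. cnj (U$$(a,i)) * V$$(a,j))" unfolding w_def ad_def ..
    have "complex_of_real (ev!j * (cmod w)^2) = complex_of_real (ev!j) * (w * cnj w)"
      by (simp add: cmod_sq_complex[symmetric])
    also have "\<dots> = (\<Sum>a<N. \<Sum>b<N. (cnj (U$$(a,i)) * V$$(a,j)) * complex_of_real (ev!j) * (cnj (V$$(b,j)) * U$$(b,i)))"
      unfolding w by (simp add: sum_product sum_distrib_left ac_simps)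
    finally show "(\<Sum>a<N. \<Sum>b<N. (cnj (U$$(a,i)) * V$$(a,j)) * complex_of_real (ev!j) * (cnj (V$$(b,j)) * U$$(b,i)))
       = complex_of_real (ev!j * (cmod (ad N U (\<lambda>a. V$$(a,j)) i))^2)" unfolding w_def by simp
  qed
  finally show ?thesis .
qed


lemma sum_add_split: "(\<Sum>t<(a::nat)+(b::nat). f t) = (\<Sum>t<a. f t) + (\<Sum>t<b. f (a+t) :: real)"
  by (induction b) (simp_all add: algebra_simps)

lemma S0: "S_val lam s 0 = 0" unfolding S_val_def by simp

lemma pt_sq: "z * complex_of_real r * cnj z = complex_of_real (r * (cmod z)^2)"
proof -
  have "complex_of_real (r * (cmod z)^2) = complex_of_real r * (z * cnj z)"
    by (simp only: of_real_mult complex_norm_square)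
  then show ?thesis by (simp only: mult.commute mult.left_commute)
qed

theorem theorem1:
  fixes N :: nat and U \<rho> :: "complex mat" and ev :: "real list"
  assumes "N \<ge> 1"
    and "unitary_mat N U"
    and "density_mat N \<rho>"
    and "length ev = N"
    and "sorted_wrt (\<ge>) ev"
    and "char_poly \<rho> = (\<Prod>x\<leftarrow>ev. [:- complex_of_real x, 1:])"
  shows "majorized
           (map (\<lambda>i. Re (\<rho> $$ (i,i))) [0..<N] @
            map (\<lambda>i. Re ((mat_adjoint U * \<rho> * U) $$ (i,i))) [0..<N])
           (W_vec N (\<lambda>j. if 1 \<le> j \<and> j \<le> N then ev ! (j - 1) else 0) (s_val N U))"
proof -
  note len = assms(4) and srt = assms(5)
  have Uc: "U \<in> carrier_mat N N" using assms(2) unfolding unitary_mat_def by auto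
  have Uu: "unc N (\<lambda>i j. U$$(i,j))" by (rule unitary_UN[OF assms(2)])
  interpret UU N U by unfold_locales (rule Uc, rule Uu)
  have rc: "\<rho> \<in> carrier_mat N N" and herm: "mat_adjoint \<rho> = \<rho>"
    and psd: "\<forall>v \<in> carrier_vec N. conjugate v \<bullet> (\<rho> *\<^sub>v v) \<ge> 0" and tr: "mat_trace \<rho> = 1"
    using assms(3) unfolding density_mat_def by auto
  obtain V where V: "unitary_mat N V"
    and rep: "\<forall>i<N. \<forall>k<N. \<rho> $$ (i,k) = (\<Sum>j<N. V$$(i,j) * complex_of_real (ev!j) * cnj (V$$(k,j)))"
    using spectral[OF rc herm assms(6)] by blast
  have Vc: "V \<in> carrier_mat N N" using V unfolding unitary_mat_def by auto
  have Vu: "unc N (\<lambda>i j. V$$(i,j))" by (rule unitary_UN[OF V])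
  define Y where "Y = (\<lambda>i j. V$$(i,j))"
  have Yu: "unc N Y" unfolding Y_def by (rule Vu)
  define g where "g t j = (cmod (sv N U (\<lambda>i. Y i j) t))^2" for t j
  define xl where "xl = map (\<lambda>i. Re (\<rho> $$ (i,i))) [0..<N] @ map (\<lambda>i. Re ((mat_adjoint U * \<rho> * U) $$ (i,i))) [0..<N]"
  define lam where "lam = (\<lambda>j. if 1 \<le> j \<and> j \<le> N then ev ! (j - 1) else (0::real))"
  define s where "s = s_val N U"
  define W where "W = W_vec N lam s"
  have lenx: "length xl = 2 * N" unfolding xl_def by simp
  have lenW: "length W = 2 * N" unfolding W_def W_vec_def by simp
  have colV: "(\<Sum>i<N. (cmod (Y i j))^2) = 1" if j: "j < N" for j
  proof -
    have "complex_of_real (\<Sum>i<N. (cmod (Y i j))^2) = (\<Sum>i<N. cnj (Y i j) * Y i j)"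
      by (simp only: of_real_sum cnj_mult_self)
    also have "\<dots> = 1" using Yu j unfolding unc_def onc_def by auto
    finally show ?thesis by (simp only: of_real_eq_1_iff)
  qed
  have xnth: "xl ! t = (\<Sum>j<N. ev!j * g t j)" if t: "t < 2 * N" for t
  proof (cases "t < N")
    case True
    have "xl ! t = Re (\<rho> $$ (t,t))" unfolding xl_def using True by (simp add: nth_append)
    also have "\<rho> $$ (t,t) = (\<Sum>j<N. V$$(t,j) * complex_of_real (ev!j) * cnj (V$$(t,j)))"
      using rep True by simp
    also have "\<dots> = (\<Sum>j<N. complex_of_real (ev!j * (cmod (Y t j))^2))"
      unfolding Y_def pt_sq ..
    finally show ?thesis unfolding g_def sv_def using True by (simp add: Re_sum)
  next
    case False
    define i where "i = t - N"
    have i: "i < N" using t False unfolding i_def by simp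
    have ui: "[0..<N] ! i = i" using i by simp
    have "xl ! t = map (\<lambda>i. Re ((mat_adjoint U * \<rho> * U) $$ (i,i))) [0..<N] ! i"
      unfolding xl_def i_def using False by (simp add: nth_append)
    also have "\<dots> = Re ((mat_adjoint U * \<rho> * U) $$ (i,i))" using i ui by simp
    also have "(mat_adjoint U * \<rho> * U) $$ (i,i) = (\<Sum>j<N. complex_of_real (ev!j * (cmod (ad N U (\<lambda>a. V$$(a,j)) i))^2))"
      by (rule diag_conj[OF Uc rc rep i])
    finally show ?thesis unfolding g_def sv_def Y_def i_def using False by (simp add: Re_sum)
  qed
  have ev0: "\<forall>j<N. 0 \<le> ev!j"
  proof (intro allI impI)
    fix j assume j: "j < N"
    define v where "v = col V j"
    have vc: "v \<in> carrier_vec N" unfolding v_def carrier_vec_def using Vc by simp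
    have "0 \<le> conjugate v \<bullet> (\<rho> *\<^sub>v v)" using psd vc by blast
    moreover have "conjugate v \<bullet> (\<rho> *\<^sub>v v) = complex_of_real (ev!j)"
    proof -
      have rv: "(\<rho> *\<^sub>v v) $ a = V$$(a,j) * complex_of_real (ev!j)" if a: "a < N" for a
      proof -
        have "(\<rho> *\<^sub>v v) $ a = (\<Sum>b<N. \<rho> $$ (a,b) * V$$(b,j))"
          using rc vc a Vc j unfolding v_def by (subst mult_vec_idx) auto
        also have "\<dots> = (\<Sum>b<N. \<Sum>l<N. V$$(a,l) * complex_of_real (ev!l) * (cnj (V$$(b,l)) * V$$(b,j)))"
          using rep a by (simp add: sum_distrib_right mult.assoc)
        also have "\<dots> = (\<Sum>l<N. V$$(a,l) * complex_of_real (ev!l) * (\<Sum>b<N. cnj (V$$(b,l)) * V$$(b,j)))"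
          by (subst sum.swap) (simp add: sum_distrib_left)
        also have "\<dots> = (\<Sum>l<N. V$$(a,l) * complex_of_real (ev!l) * (if l = j then 1 else 0))"
          using Vu j unfolding unc_def onc_def by (intro sum.cong refl) auto
        also have "\<dots> = V$$(a,j) * complex_of_real (ev!j)" using j by (simp add: if_distrib cong: if_cong)
        finally show ?thesis .
      qed
      have "conjugate v \<bullet> (\<rho> *\<^sub>v v) = (\<Sum>a<N. cnj (V$$(a,j)) * (V$$(a,j) * complex_of_real (ev!j)))"
        unfolding scalar_prod_def using rc vc Vc j rv unfolding v_def
        by (simp add: atLeast0LessThan)
      also have "\<dots> = complex_of_real (ev!j) * (\<Sum>a<N. cnj (V$$(a,j)) * V$$(a,j))"
        by (simp add: sum_distrib_left ac_simps)
      also have "(\<Sum>a<N. cnj (V$$(a,j)) * V$$(a,j)) = 1" using Vu j unfolding unc_def onc_def by auto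
      finally show ?thesis by simp
    qed
    ultimately show "0 \<le> ev!j" by (simp add: less_eq_complex_def)
  qed
  have evsum: "(\<Sum>j<N. ev!j) = 1"
  proof -
    have "complex_of_real (\<Sum>j<N. ev!j) = (\<Sum>i<N. \<rho> $$ (i,i))"
    proof -
      have "(\<Sum>i<N. \<rho> $$ (i,i)) = (\<Sum>i<N. \<Sum>j<N. V$$(i,j) * complex_of_real (ev!j) * cnj (V$$(i,j)))"
        using rep by simp
      also have "\<dots> = (\<Sum>i<N. \<Sum>j<N. complex_of_real (ev!j * (cmod (Y i j))^2))"
        unfolding Y_def pt_sq ..
      also have "\<dots> = (\<Sum>i<N. \<Sum>j<N. complex_of_real (ev!j) * complex_of_real ((cmod (Y i j))^2))"
        by (simp only: of_real_mult)
      also have "\<dots> = (\<Sum>j<N. complex_of_real (ev!j) * complex_of_real (\<Sum>i<N. (cmod (Y i j))^2))"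
        by (subst sum.swap) (simp add: sum_distrib_left)
      also have "\<dots> = (\<Sum>j<N. complex_of_real (ev!j))" using colV by simp
      finally show ?thesis by simp
    qed
    also have "\<dots> = mat_trace \<rho>" unfolding mat_trace_def using rc by simp
    finally show ?thesis using tr by (simp only: of_real_eq_1_iff)
  qed
  have Wnth: "W ! t = S_val lam s (Suc t) - S_val lam s t" if "t < 2 * N" for t
    unfolding W_def W_vec_def using that by (simp del: upt_Suc)
  have Wsum: "(\<Sum>t<m. W ! t) = S_val lam s m" if "m \<le> 2 * N" for m
  proof -
    have "(\<Sum>t<m. W ! t) = (\<Sum>t<m. S_val lam s (Suc t) - S_val lam s t)" using that Wnth by simp
    also have "\<dots> = S_val lam s m" by (simp add: sum_lessThan_telescope S0)
    finally show ?thesis .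
  qed
  have Sm: "S_val lam s m = (\<Sum>j<N. ev!j * cc s m (Suc j))" for m by (rule S_ev[OF lam_def])
  have main: "sum_list (take m (rev (sort xl))) \<le> sum_list (take m (rev (sort W)))" if m: "m \<le> 2 * N" for m
  proof -
    obtain T where T: "T \<subseteq> {..<2*N}" "card T = m" "sum_list (take m (rev (sort xl))) = (\<Sum>t\<in>T. xl ! t)"
      using top1[of m xl] m lenx by auto
    have "(\<Sum>t\<in>T. xl ! t) = (\<Sum>t\<in>T. \<Sum>j<N. ev!j * g t j)" using xnth T(1) by (intro sum.cong refl) auto
    also have "\<dots> = (\<Sum>j<N. ev!j * (\<Sum>t\<in>T. (cmod (sv N U (\<lambda>i. Y i j) t))^2))"
      unfolding g_def by (subst sum.swap) (simp add: sum_distrib_left)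
    also have "\<dots> \<le> (\<Sum>j<N. ev!j * cc (s_val N U) (card T) (Suc j))"
      by (rule key_bound[OF T(1) Yu srt len ev0])
    also have "\<dots> = S_val lam s m" using Sm[of m] T(2) unfolding s_def by simp
    also have "\<dots> = (\<Sum>t\<in>{..<m}. W ! t)" using Wsum[OF m] by simp
    also have "\<dots> \<le> sum_list (take m (rev (sort W)))"
      by (rule top2) (use m lenW in auto)
    finally show ?thesis using T(3) by simp
  qed
  have sumW: "sum_list W = 2"
  proof -
    have "sum_list W = (\<Sum>t<2*N. W ! t)" using lenW by (simp add: sum_list_sum_nth atLeast0LessThan)
    also have "\<dots> = S_val lam s (2*N)" by (rule Wsum) simp
    also have "\<dots> = (\<Sum>j<N. ev!j * cc s (2*N) (Suc j))" by (rule Sm)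
    also have "\<dots> = (\<Sum>j<N. ev!j * 2)"
    proof (intro sum.cong refl)
      fix j assume j: "j \<in> {..<N}"
      have "s (2 * N - Suc j) = 1" unfolding s_def by (rule s_eq1) (use j assms(1) in auto)
      then show "ev!j * cc s (2*N) (Suc j) = ev!j * 2" using j unfolding cc_def by simp
    qed
    also have "\<dots> = 2" using evsum by (simp add: sum_distrib_right[symmetric])
    finally show ?thesis .
  qed
  have sumx: "sum_list xl = 2"
  proof -
    have "sum_list xl = (\<Sum>t<2*N. xl ! t)" using lenx by (simp add: sum_list_sum_nth atLeast0LessThan)
    also have "\<dots> = (\<Sum>t<2*N. \<Sum>j<N. ev!j * g t j)" using xnth by simp
    also have "\<dots> = (\<Sum>j<N. ev!j * (\<Sum>t<2*N. g t j))" by (subst sum.swap) (simp add: sum_distrib_left)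
    also have "\<dots> = (\<Sum>j<N. ev!j * 2)"
    proof (intro sum.cong refl)
      fix j assume j: "j \<in> {..<N}"
      have "(\<Sum>t<2*N. g t j) = (\<Sum>t<N. g t j) + (\<Sum>t<N. g (N + t) j)"
        using sum_add_split[of "\<lambda>t. g t j" N N] by (simp add: mult_2)
      also have "(\<Sum>t<N. g t j) = 1" using colV j unfolding g_def sv_def by simp
      also have "(\<Sum>t<N. g (N + t) j) = nrm N (ad N U (\<lambda>i. Y i j))" unfolding g_def sv_def nrm_def by simp
      also have "\<dots> = 1" using nrm_ad[OF Uu, of "\<lambda>i. Y i j"] colV j unfolding nrm_def by simp
      finally show "ev!j * (\<Sum>t<2*N. g t j) = ev!j * 2" by simp
    qed
    also have "\<dots> = 2" using evsum by (simp add: sum_distrib_right[symmetric])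
    finally show ?thesis .
  qed
  have "majorized xl W"
    unfolding majorized_def Let_def using lenx lenW main sumW sumx by simp
  then show ?thesis unfolding xl_def W_def lam_def s_def .
qed


end
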